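(* Let $p>1$ and let $s,q,V:\mathbb{R}^3\to(0,\infty)$ be radially symmetric $C^2$-functions with one-dimensional representatives $\tilde s,\tilde q,\tilde V$. Let $\psi:[0,\infty)\times\mathbb{R}\to\mathbb{R}$ be a $C^2$-function with $\psi(0,t)=\psi''(0,t)=0$ for all $t$, where $'$ denotes $\partial/\partial r$. Then $U(x,t):=\psi(|x|,t)\frac{x}{|x|}$ (extended to $x=0$) is a $C^2(\mathbb{R}^3\times\mathbb{R})$ function, and it solves $$s(x)\partial_t^2U+\nabla\times\nabla\times U+q(x)U\pm V(x)|U|^{p-1}U=0\quad\text{on }\mathbb{R}^3\times\mathbb{R}$$ if and only if $\psi$ satisfies $$\tilde s(r)\ddot\psi+\tilde q(r)\psi\pm\tilde V(r)|\psi|^{p-1}\psi=0\quad\text{for }r\ge0,\ t\in\mathbb{R},$$ with the same choice of sign in both equations, where $\dot{}$ denotes $\partial/\partial t$.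
   Context: For a radially symmetric $C^2$-function $f:\mathbb{R}^3\to\mathbb{R}$, its one-dimensional representative $\tilde f:[0,\infty)\to\mathbb{R}$ is defined by $\tilde f(|x|)=f(x)$; it satisfies $\tilde f\in C^2([0,\infty))$, $\tilde f'(0)=0$. *)

theory Defs
  imports "HOL-Analysis.Analysis"
begin

definition C2_on :: "'a::real_normed_vector set \<Rightarrow> ('a \<Rightarrow> 'b::real_normed_vector) \<Rightarrow> bool" where
  "C2_on S f \<longleftrightarrow>
     (\<exists>(f' :: 'a \<Rightarrow> ('a \<Rightarrow>\<^sub>L 'b)) (f'' :: 'a \<Rightarrow> ('a \<Rightarrow>\<^sub>L ('a \<Rightarrow>\<^sub>L 'b))).
        (\<forall>x\<in>S. (f has_derivative blinfun_apply (f' x)) (at x within S)) \<and>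
        (\<forall>x\<in>S. (f' has_derivative blinfun_apply (f'' x)) (at x within S)) \<and>
        continuous_on S f'')"

definition pdiff :: "(real^3 \<Rightarrow> real) \<Rightarrow> 3 \<Rightarrow> real^3 \<Rightarrow> real" where
  "pdiff g i x = frechet_derivative g (at x) (axis i 1)"

definition curl :: "(real^3 \<Rightarrow> real^3) \<Rightarrow> real^3 \<Rightarrow> real^3" where
  "curl F x = vector
     [pdiff (\<lambda>y. F y $ 3) 2 x - pdiff (\<lambda>y. F y $ 2) 3 x,
      pdiff (\<lambda>y. F y $ 1) 3 x - pdiff (\<lambda>y. F y $ 3) 1 x,
      pdiff (\<lambda>y. F y $ 2) 1 x - pdiff (\<lambda>y. F y $ 1) 2 x]"

end

theory Submission
  imports Defs
begin



type_synonym V = "(real^3) \<times> real"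


lemma ext_deriv_aux:
  fixes f :: "V \<Rightarrow> 'c::real_normed_vector"
    and F :: "V \<Rightarrow> (V \<Rightarrow>\<^sub>L 'c)"
  assumes der: "\<And>z. fst z \<noteq> 0 \<Longrightarrow> (f has_derivative blinfun_apply (F z)) (at z)"
    and lim: "(F \<longlongrightarrow> L) (at a within {z. fst z \<noteq> 0})"
    and cont: "\<And>b. fst b = 0 \<Longrightarrow> (f \<longlongrightarrow> f b) (at b within {z. fst z \<noteq> 0})"
    and a: "fst a = 0"
  shows "(f has_derivative blinfun_apply L) (at a)"
  unfolding has_derivative_at_alt
proof (intro conjI allI impI)
  show "bounded_linear (blinfun_apply L)" by (rule blinfun.bounded_linear_right)
  fix e :: real assume e: "e > 0"
  let ?G = "{z::V. fst z \<noteq> 0}"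
  from lim[THEN tendstoD, OF e] obtain d where d: "d > 0"
    and dF: "\<And>z. z \<in> ?G \<Longrightarrow> z \<noteq> a \<Longrightarrow> dist z a < d \<Longrightarrow> dist (F z) L < e"
    unfolding eventually_at by auto
  define g where "g y = f y - blinfun_apply L y" for y
  have gcont: "(g \<longlongrightarrow> g b) (at b within ?G)" if "fst b = 0" for b
    unfolding g_def using cont[OF that]
    by (intro tendsto_diff blinfun.tendsto tendsto_const) (auto intro: tendsto_ident_at)
  have good: "norm (g z - g a) \<le> e * norm (z - a)" if z: "fst z \<noteq> 0" "norm (z - a) < d" for z
  proof -
    define w where "w s = a + s *\<^sub>R (z - a)" for s :: real
    have wG: "fst (w s) \<noteq> 0" if "s > 0" for s
      using z(1) a that by (simp add: w_def)
    have bound: "norm (g z - g (w s)) \<le> e * norm (z - a)" if s: "0 < s" "s \<le> 1" for s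
    proof -
      have segG: "y \<in> ?G \<and> y \<noteq> a \<and> dist y a < d" if y: "y \<in> closed_segment (w s) z" for y
      proof -
        from y obtain u where u: "0 \<le> u" "u \<le> 1" "y = (1 - u) *\<^sub>R w s + u *\<^sub>R z"
          unfolding closed_segment_def by auto
        define th where "th = (1 - u) * s + u"
        have yth: "y = a + th *\<^sub>R (z - a)"
          unfolding u(3) w_def th_def by (simp add: algebra_simps)
        have th0: "0 < th" using s u unfolding th_def
          by (cases "u = 0") (auto intro: add_nonneg_pos add_pos_nonneg mult_nonneg_nonneg)
        have th1: "th \<le> 1" using s u unfolding th_def
          by (smt (verit) mult_left_le mult_nonneg_nonneg)
        have "z \<noteq> a" using z a by auto
        show ?thesis
        proof (intro conjI)
          show "y \<in> ?G" using z(1) a th0 by (simp add: yth)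
          show "y \<noteq> a" using th0 \<open>z \<noteq> a\<close> by (simp add: yth)
          have "dist y a = th * norm (z - a)" using th0 by (simp add: yth dist_norm)
          also have "\<dots> \<le> norm (z - a)" using th1 th0 by (simp add: mult_left_le_one_le mult_le_cancel_right1)
          finally show "dist y a < d" using z(2) by simp
        qed
      qed
      have "norm (g z - g (w s)) \<le> e * norm (z - w s)"
      proof (rule differentiable_bound[where f' = "\<lambda>y. blinfun_apply (F y - L)"])
        show "convex (closed_segment (w s) z)" by simp
        show "(g has_derivative blinfun_apply (F y - L)) (at y within closed_segment (w s) z)"
          if "y \<in> closed_segment (w s) z" for y
        proof -
          have "fst y \<noteq> 0" using segG[OF that] by simp
          from der[OF this] have "(g has_derivative (\<lambda>h. blinfun_apply (F y) h - blinfun_apply L h)) (at y)"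
            unfolding g_def by (auto intro!: derivative_eq_intros)
          moreover have "blinfun_apply (F y - L) = (\<lambda>h. blinfun_apply (F y) h - blinfun_apply L h)" by (auto simp: blinfun.diff_left)
          ultimately show ?thesis by (auto intro: has_derivative_at_withinI)
        qed
        show "onorm (blinfun_apply (F y - L)) \<le> e" if "y \<in> closed_segment (w s) z" for y
        proof -
          have "dist (F y) L < e" using segG[OF that] dF by blast
          then show ?thesis by (simp add: norm_blinfun.rep_eq[symmetric] dist_norm)
        qed
      qed auto
      also have "norm (z - w s) = (1 - s) * norm (z - a)"
      proof -
        have "z - w s = (1 - s) *\<^sub>R (z - a)" by (simp add: w_def algebra_simps)
        then show ?thesis using s by simp
      qed
      also have "e * ((1 - s) * norm (z - a)) \<le> e * norm (z - a)"
        using e s by (intro mult_left_mono) (auto simp: mult_left_le_one_le)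
      finally show ?thesis .
    qed
    have wlim: "filterlim w (at a within ?G) (at_right 0)"
    proof (rule filterlim_at_withinI)
      show "(w \<longlongrightarrow> a) (at_right 0)" unfolding w_def
        by (auto intro!: tendsto_eq_intros)
      have "z \<noteq> a" using z a by auto
      show "\<forall>\<^sub>F s in at_right 0. w s \<in> ?G - {a}"
        using eventually_at_right_less[of 0]
      proof (rule eventually_mono)
        fix s :: real assume "0 < s"
        then show "w s \<in> ?G - {a}" using wG[of s] \<open>z \<noteq> a\<close> by (auto simp: w_def)
      qed
    qed
    have gw: "((\<lambda>s. g (w s)) \<longlongrightarrow> g a) (at_right 0)"
      using filterlim_compose[OF gcont[OF a] wlim] by (simp add: o_def)
    have "((\<lambda>s. norm (g z - g (w s))) \<longlongrightarrow> norm (g z - g a)) (at_right 0)"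
      using gw by (intro tendsto_norm tendsto_diff tendsto_const)
    moreover have "\<forall>\<^sub>F s in at_right 0. norm (g z - g (w s)) \<le> e * norm (z - a)"
      unfolding eventually_at_right[OF zero_less_one]
      by (intro exI[of _ 1]) (auto intro: bound)
    ultimately show ?thesis
      by (intro tendsto_upperbound) auto
  qed
  show "\<exists>d>0. \<forall>y. norm (y - a) < d \<longrightarrow> norm (f y - f a - blinfun_apply L (y - a)) \<le> e * norm (y - a)"
  proof (intro exI[of _ d] conjI allI impI d)
    fix y assume y: "norm (y - a) < d"
    have eq: "f y - f a - blinfun_apply L (y - a) = g y - g a" for y
      by (simp add: g_def blinfun.diff_right)
    show "norm (f y - f a - blinfun_apply L (y - a)) \<le> e * norm (y - a)"
    proof (cases "fst y = 0")
      case False then show ?thesis using good y eq by simp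
    next
      case True
      define v where "v s = (s *\<^sub>R axis (1::3) (1::real), snd y)" for s
      have vt: "(v \<longlongrightarrow> y) (at_right 0)" unfolding v_def
        using True by (cases y) (auto intro!: tendsto_eq_intros)
      have vlim: "filterlim v (at y within ?G) (at_right 0)"
      proof (rule filterlim_at_withinI)
        show "(v \<longlongrightarrow> y) (at_right 0)" by (rule vt)
        show "\<forall>\<^sub>F s in at_right 0. v s \<in> ?G - {y}"
          using True by (auto simp: v_def eventually_at_filter axis_eq_0_iff)
      qed
      have gv: "((\<lambda>s. g (v s)) \<longlongrightarrow> g y) (at_right 0)"
        using filterlim_compose[OF gcont[OF True] vlim] by (simp add: o_def)
      have nv: "((\<lambda>s. norm (v s - a)) \<longlongrightarrow> norm (y - a)) (at_right 0)"
        using vt by (intro tendsto_norm tendsto_diff tendsto_const)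
      have "((\<lambda>s. norm (g (v s) - g a) - e * norm (v s - a)) \<longlongrightarrow> norm (g y - g a) - e * norm (y - a)) (at_right 0)"
        using gv nv vt by (intro tendsto_diff tendsto_norm tendsto_mult tendsto_const)
      moreover have "\<forall>\<^sub>F s in at_right 0. norm (g (v s) - g a) - e * norm (v s - a) \<le> 0"
      proof -
        have "\<forall>\<^sub>F s in at_right 0. norm (v s - a) < d" using y nv
          by (simp add: order_tendstoD(2))
        then show ?thesis
          using eventually_at_right_less[of 0]
        proof (rule eventually_elim2)
          fix s :: real assume "norm (v s - a) < d" "0 < s"
          moreover have "fst (v s) \<noteq> 0" using \<open>0 < s\<close> by (simp add: v_def axis_eq_0_iff)
          ultimately show "norm (g (v s) - g a) - e * norm (v s - a) \<le> 0" using good[of "v s"] by linarith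
        qed
      qed
      ultimately have "norm (g y - g a) - e * norm (y - a) \<le> 0"
        by (intro tendsto_upperbound) auto
      then show ?thesis using eq by simp
    qed
  qed
qed




type_synonym R2 = "real \<times> real"


locale rad0 =
  fixes \<psi> :: "real \<Rightarrow> real \<Rightarrow> real"
    and Dp :: "R2 \<Rightarrow> (R2 \<Rightarrow>\<^sub>L real)"
    and DDp :: "R2 \<Rightarrow> (R2 \<Rightarrow>\<^sub>L (R2 \<Rightarrow>\<^sub>L real))"
  assumes dP: "\<And>z. z \<in> {0..} \<times> UNIV \<Longrightarrow>
      ((\<lambda>(r, t). \<psi> r t) has_derivative blinfun_apply (Dp z)) (at z within {0..} \<times> UNIV)"
    and dDp: "\<And>z. z \<in> {0..} \<times> UNIV \<Longrightarrow>
      (Dp has_derivative blinfun_apply (DDp z)) (at z within {0..} \<times> UNIV)"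
    and cDDp: "continuous_on ({0..} \<times> UNIV) DDp"
    and psi0: "\<And>t. \<psi> 0 t = 0"
begin

definition "pr z = Dp z (1, 0)"
definition "pt z = Dp z (0, 1)"
definition "prr z = DDp z (1, 0) (1, 0)"
definition "prt z = DDp z (0, 1) (1, 0)"
definition "ptr z = DDp z (1, 0) (0, 1)"
definition "ptt z = DDp z (0, 1) (0, 1)"

lemma lin2: "blinfun_apply (B :: R2 \<Rightarrow>\<^sub>L 'a::real_normed_vector) (dr, dt) = dr *\<^sub>R B (1, 0) + dt *\<^sub>R B (0, 1)"
proof -
  have "(dr, dt) = dr *\<^sub>R (1, 0) + dt *\<^sub>R (0::real, 1::real)" by simp
  then show ?thesis by (simp only: blinfun.add_right[symmetric] blinfun.scaleR_right[symmetric])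
qed

lemma dPr: "z \<in> {0..} \<times> UNIV \<Longrightarrow>
   (pr has_derivative (\<lambda>v. DDp z v (1, 0))) (at z within {0..} \<times> UNIV)"
  unfolding pr_def using blinfun.FDERIV[OF dDp[of z] has_derivative_const, of "(1,0)"] by simp

lemma dPt: "z \<in> {0..} \<times> UNIV \<Longrightarrow>
   (pt has_derivative (\<lambda>v. DDp z v (0, 1))) (at z within {0..} \<times> UNIV)"
  unfolding pt_def using blinfun.FDERIV[OF dDp[of z] has_derivative_const, of "(0,1)"] by simp

lemma slice_t:
  assumes "(\<Phi> has_derivative \<Phi>') (at (u, t) within {0..} \<times> UNIV)" "u \<ge> 0"
  shows "((\<lambda>s. \<Phi> (u, s)) has_derivative (\<lambda>h. \<Phi>' (0, h))) (at t)"
proof -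
  have "((\<lambda>s. (u, s)) has_derivative (\<lambda>h. (0, h))) (at t)"
    by (auto intro!: derivative_eq_intros)
  moreover have "(\<Phi> has_derivative \<Phi>') (at (u, t) within (\<lambda>s. (u, s)) ` UNIV)"
    using assms(2) by (intro has_derivative_subset[OF assms(1)]) auto
  ultimately show ?thesis by (rule has_derivative_in_compose[where s=UNIV, simplified])
qed

lemma slice_r:
  assumes "(\<Phi> has_derivative \<Phi>') (at (u, t) within {0..} \<times> UNIV)"
  shows "((\<lambda>s. \<Phi> (s, t)) has_derivative (\<lambda>h. \<Phi>' (h, 0))) (at u within {0..})"
proof -
  have "((\<lambda>s. (s, t)) has_derivative (\<lambda>h. (h, 0))) (at u within {0..})"
    by (auto intro!: derivative_eq_intros)
  moreover have "(\<Phi> has_derivative \<Phi>') (at (u, t) within (\<lambda>s. (s, t)) ` {0..})"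
    by (intro has_derivative_subset[OF assms(1)]) auto
  ultimately show ?thesis by (rule has_derivative_in_compose)
qed

lemma rd: fixes B :: "R2 \<Rightarrow>\<^sub>L real" shows "(f has_derivative (\<lambda>h. blinfun_apply B (h, 0))) F \<Longrightarrow> (f has_real_derivative B (1, 0)) F"
proof -
  have "(\<lambda>h. blinfun_apply B (h, 0)) = (*) (B (1, 0))"
  proof
    fix h :: real
    have "B (h, 0) = B (h *\<^sub>R (1, 0))" by simp
    then show "B (h, 0) = B (1, 0) * h" by (simp only: blinfun.scaleR_right) simp
  qed
  then show "(f has_derivative (\<lambda>h. blinfun_apply B (h, 0))) F \<Longrightarrow> (f has_real_derivative B (1, 0)) F"
    unfolding has_field_derivative_def by simp
qed

lemma td: fixes B :: "R2 \<Rightarrow>\<^sub>L real" shows "(f has_derivative (\<lambda>h. blinfun_apply B (0, h))) F \<Longrightarrow> (f has_real_derivative B (0, 1)) F"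
proof -
  have "(\<lambda>h. blinfun_apply B (0, h)) = (*) (B (0, 1))"
  proof
    fix h :: real
    have "B (0, h) = B (h *\<^sub>R (0, 1))" by simp
    then show "B (0, h) = B (0, 1) * h" by (simp only: blinfun.scaleR_right) simp
  qed
  then show "(f has_derivative (\<lambda>h. blinfun_apply B (0, h))) F \<Longrightarrow> (f has_real_derivative B (0, 1)) F"
    unfolding has_field_derivative_def by simp
qed

lemma rd': assumes "linear \<phi>" "(f has_derivative (\<lambda>h. \<phi> (h, 0))) F" shows "(f has_real_derivative \<phi> (1, 0)) F"
proof -
  have "(\<lambda>h. \<phi> (h, 0)) = (*) (\<phi> (1, 0))"
  proof
    fix h :: real
    have "\<phi> (h, 0) = \<phi> (h *\<^sub>R (1, 0))" by simp
    also have "\<dots> = h * \<phi> (1, 0)" using linear_scale[OF assms(1), of h "(1,0)"] by (simp only: real_scaleR_def)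
    finally show "\<phi> (h, 0) = \<phi> (1, 0) * h" by simp
  qed
  then show ?thesis using assms(2) unfolding has_field_derivative_def by simp
qed

lemma td': assumes "linear \<phi>" "(f has_derivative (\<lambda>h. \<phi> (0, h))) F" shows "(f has_real_derivative \<phi> (0, 1)) F"
proof -
  have "(\<lambda>h. \<phi> (0, h)) = (*) (\<phi> (0, 1))"
  proof
    fix h :: real
    have "\<phi> (0, h) = \<phi> (h *\<^sub>R (0, 1))" by simp
    also have "\<dots> = h * \<phi> (0, 1)" using linear_scale[OF assms(1), of h "(0,1)"] by (simp only: real_scaleR_def)
    finally show "\<phi> (0, h) = \<phi> (0, 1) * h" by simp
  qed
  then show ?thesis using assms(2) unfolding has_field_derivative_def by simp
qed

lemma linDD: "linear (\<lambda>v. blinfun_apply (blinfun_apply (DDp z) v) w)"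
  by (intro bounded_linear.linear bounded_linear_compose[OF blinfun.bounded_linear_left blinfun.bounded_linear_right])

lemma F1: "u \<ge> 0 \<Longrightarrow> ((\<lambda>u. \<psi> u t) has_real_derivative pr (u, t)) (at u within {0..})"
  unfolding pr_def using slice_r[OF dP[of "(u,t)"]] by (intro rd) auto
lemma F2: "u \<ge> 0 \<Longrightarrow> ((\<lambda>u. pr (u, t)) has_real_derivative prr (u, t)) (at u within {0..})"
  unfolding prr_def using slice_r[OF dPr[of "(u,t)"]] by (intro rd'[OF linDD]) auto
lemma F3: "u \<ge> 0 \<Longrightarrow> ((\<lambda>u. pt (u, t)) has_real_derivative ptr (u, t)) (at u within {0..})"
  unfolding ptr_def using slice_r[OF dPt[of "(u,t)"]] by (intro rd'[OF linDD]) auto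
lemma F4: "u \<ge> 0 \<Longrightarrow> ((\<lambda>t. \<psi> u t) has_real_derivative pt (u, t)) (at t)"
  unfolding pt_def using slice_t[OF dP[of "(u,t)"]] by (intro td) auto
lemma F5: "u \<ge> 0 \<Longrightarrow> ((\<lambda>t. pr (u, t)) has_real_derivative prt (u, t)) (at t)"
  unfolding prt_def using slice_t[OF dPr[of "(u,t)"]] by (intro td'[OF linDD]) auto
lemma F6: "u \<ge> 0 \<Longrightarrow> ((\<lambda>t. pt (u, t)) has_real_derivative ptt (u, t)) (at t)"
  unfolding ptt_def using slice_t[OF dPt[of "(u,t)"]] by (intro td'[OF linDD]) auto

lemma pt0: "pt (0, t) = 0"
proof -
  have "((\<lambda>t. \<psi> 0 t) has_real_derivative 0) (at t)" by (simp add: psi0)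
  then show ?thesis using F4[of 0 t] DERIV_unique by auto
qed

lemma ptt0: "ptt (0, t) = 0"
proof -
  have "((\<lambda>t. pt (0, t)) has_real_derivative 0) (at t)" by (simp add: pt0)
  then show ?thesis using F6[of 0 t] DERIV_unique by auto
qed

end

locale rad = rad0 +
  assumes prr0: "\<And>t. DDp (0, t) (1, 0) (1, 0) = 0"




lemma deriv_lip_bound:
  fixes \<phi> :: "real \<Rightarrow> real"
  assumes d: "(\<phi> has_real_derivative D) (at t)"
    and ev: "\<forall>\<^sub>F t' in at t. \<bar>\<phi> t' - \<phi> t\<bar> \<le> M * \<bar>t' - t\<bar>"
  shows "\<bar>D\<bar> \<le> M"
proof -
  have "((\<lambda>t'. (\<phi> t' - \<phi> t) / (t' - t)) \<longlongrightarrow> D) (at t)"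
    using d unfolding has_field_derivative_iff by simp
  then have "((\<lambda>t'. \<bar>(\<phi> t' - \<phi> t) / (t' - t)\<bar>) \<longlongrightarrow> \<bar>D\<bar>) (at t)"
    by (rule tendsto_rabs)
  moreover have "\<forall>\<^sub>F t' in at t. \<bar>(\<phi> t' - \<phi> t) / (t' - t)\<bar> \<le> M"
    using ev eventually_at_filter[THEN iffD1, OF eventually_True]
  proof -
    have "\<forall>\<^sub>F t' in at t. t' \<noteq> t" by (simp add: eventually_at_filter)
    with ev show ?thesis
    proof eventually_elim
      case (elim t')
      then show ?case by (simp add: abs_divide divide_le_eq)
    qed
  qed
  ultimately show ?thesis by (intro tendsto_upperbound) auto
qed

lemma dist_seg:
  fixes u r s t t' t0 d :: real
  assumes "0 \<le> u" "u \<le> r" "s \<in> closed_segment t t'"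
    "dist (r, t) (0, t0) < d" "dist (r, t') (0, t0) < d"
  shows "dist (u, s) (0, t0) < d"
proof -
  have s: "min t t' \<le> s" "s \<le> max t t'" using assms(3) by (auto simp: closed_segment_eq_real_ivl split: if_splits)
  have "(s - t0)^2 \<le> (t - t0)^2 \<or> (s - t0)^2 \<le> (t' - t0)^2"
  proof -
    have "\<bar>s - t0\<bar> \<le> \<bar>t - t0\<bar> \<or> \<bar>s - t0\<bar> \<le> \<bar>t' - t0\<bar>" using s by (auto simp: min_def max_def split: if_splits)
    then show ?thesis by (metis abs_ge_zero power2_abs power_mono)
  qed
  moreover have "u^2 \<le> r^2" using assms(1,2) by (simp add: power_mono)
  ultimately have "u^2 + (s - t0)^2 \<le> r^2 + (t - t0)^2 \<or> u^2 + (s - t0)^2 \<le> r^2 + (t' - t0)^2" by auto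
  then have sq: "sqrt (u^2 + (s - t0)^2) \<le> sqrt (r^2 + (t - t0)^2) \<or> sqrt (u^2 + (s - t0)^2) \<le> sqrt (r^2 + (t' - t0)^2)"
    using real_sqrt_le_mono by blast
  have "sqrt (r^2 + (t - t0)^2) < d" "sqrt (r^2 + (t' - t0)^2) < d"
    using assms(4,5) by (simp_all add: dist_Pair_Pair dist_real_def power2_abs)
  with sq have "sqrt (u^2 + (s - t0)^2) < d" by linarith
  then show ?thesis by (simp add: dist_Pair_Pair dist_real_def power2_abs)
qed

lemma dist_seg0:
  fixes u r t t0 d :: real
  assumes "0 \<le> u" "u \<le> r" "dist (r, t) (0, t0) < d"
  shows "dist (u, t) (0, t0) < d"
  using dist_seg[OF assms(1,2), where t=t and t'=t and s=t and t0=t0 and d=d] assms(3) by simp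

context rad begin

lemma DDp_close:
  assumes e: "e > 0"
  shows "\<exists>d>0. \<forall>w\<in>{0::real..} \<times> UNIV. dist w (0, t0) < d \<longrightarrow>
     (\<forall>v1 v2. norm (DDp w v1 v2 - DDp (0, t0) v1 v2) \<le> e * norm v1 * norm v2)"
proof -
  have "(0::real, t0) \<in> {0..} \<times> UNIV" by simp
  from cDDp[unfolded continuous_on_iff, rule_format, OF this e] obtain d where
    d: "d > 0" "\<And>w. w \<in> {0..} \<times> UNIV \<Longrightarrow> dist w (0, t0) < d \<Longrightarrow> dist (DDp w) (DDp (0, t0)) < e"
    by auto
  show ?thesis
  proof (intro exI[of _ d] conjI ballI impI allI d(1))
    fix w v1 v2 :: R2 assume w: "w \<in> {0..} \<times> UNIV" "dist w (0, t0) < d"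
    have "norm (DDp w v1 v2 - DDp (0, t0) v1 v2) = norm ((DDp w - DDp (0, t0)) v1 v2)"
      by (simp add: blinfun.diff_left)
    also have "\<dots> \<le> norm ((DDp w - DDp (0, t0)) v1) * norm v2" by (rule norm_blinfun)
    also have "\<dots> \<le> norm (DDp w - DDp (0, t0)) * norm v1 * norm v2"
      by (intro mult_right_mono norm_blinfun) auto
    also have "\<dots> \<le> e * norm v1 * norm v2"
      using d(2)[OF w] by (intro mult_right_mono) (auto simp: dist_norm)
    finally show "norm (DDp w v1 v2 - DDp (0, t0) v1 v2) \<le> e * norm v1 * norm v2" .
  qed
qed

lemma E1:
  assumes e: "e > 0"
  shows "\<exists>d>0. \<forall>r t. 0 < r \<longrightarrow> dist (r, t) (0, t0) < d \<longrightarrow> \<bar>\<psi> r t - r * pr (r, t)\<bar> \<le> e * r^2"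
proof -
  obtain d where d: "d > 0" and dd: "\<And>w v1 v2. w\<in>{0::real..} \<times> UNIV \<Longrightarrow> dist w (0, t0) < d \<Longrightarrow>
     norm (DDp w v1 v2 - DDp (0, t0) v1 v2) \<le> e * norm v1 * norm v2"
    using DDp_close[OF e, of t0] by blast
  show ?thesis
  proof (intro exI[of _ d] conjI allI impI d)
    fix r t :: real assume r: "0 < r" and rt: "dist (r, t) (0, t0) < d"
    have prr_b: "\<bar>prr (u, t)\<bar> \<le> e" if "u \<in> {0..r}" for u
    proof -
      have "dist (u, t) (0, t0) < d" using dist_seg0[where u=u and r=r and t=t and t0=t0 and d=d] that rt by auto
      from dd[OF _ this, of "(1,0)" "(1,0)"] that show ?thesis by (simp add: prr_def prr0)
    qed
    have pr_b: "\<bar>pr (u, t) - pr (r, t)\<bar> \<le> e * r" if u: "u \<in> {0..r}" for u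
    proof -
      have "norm (pr (u, t) - pr (r, t)) \<le> e * norm (u - r)"
      proof (rule field_differentiable_bound[where f' = "\<lambda>u. prr (u, t)" and S = "{0..r}"])
        show "((\<lambda>u. pr (u, t)) has_field_derivative prr (x, t)) (at x within {0..r})" if "x \<in> {0..r}" for x
          using F2[of x t] that by (auto intro: DERIV_subset)
        show "norm (prr (x, t)) \<le> e" if "x \<in> {0..r}" for x using prr_b[OF that] by simp
      qed (use u r in auto)
      then show ?thesis using u e by (auto simp: abs_minus_commute intro: order.trans mult_left_mono)
    qed
    have "norm ((\<psi> r t - r * pr (r, t)) - (\<psi> 0 t - 0 * pr (r, t))) \<le> (e * r) * norm (r - 0)"
    proof (rule field_differentiable_bound[where f' = "\<lambda>u. pr (u, t) - pr (r, t)" and S = "{0..r}" and f = "\<lambda>u. \<psi> u t - u * pr (r, t)"])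
      show "((\<lambda>u. \<psi> u t - u * pr (r, t)) has_field_derivative pr (x, t) - pr (r, t)) (at x within {0..r})" if "x \<in> {0..r}" for x
        using that by (auto intro!: derivative_eq_intros DERIV_subset[OF F1])
      show "norm (pr (x, t) - pr (r, t)) \<le> e * r" if "x \<in> {0..r}" for x using pr_b[OF that] by simp
    qed (use r in auto)
    then show "\<bar>\<psi> r t - r * pr (r, t)\<bar> \<le> e * r^2" using r by (simp add: psi0 power2_eq_square mult.assoc)
  qed
qed


lemma E2:
  assumes e: "e > 0"
  shows "\<exists>d>0. \<forall>r t. 0 < r \<longrightarrow> dist (r, t) (0, t0) < d \<longrightarrow> \<bar>pt (r, t) - r * prt (0, t0)\<bar> \<le> e * r"
proof -
  define b where "b = prt (0, t0)"
  obtain d where d: "d > 0" and dd: "\<And>w v1 v2. w\<in>{0::real..} \<times> UNIV \<Longrightarrow> dist w (0, t0) < d \<Longrightarrow>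
     norm (DDp w v1 v2 - DDp (0, t0) v1 v2) \<le> e * norm v1 * norm v2"
    using DDp_close[OF e, of t0] by blast
  show ?thesis
  proof (intro exI[of _ d] conjI allI impI d)
    fix r t :: real assume r: "0 < r" and rt: "dist (r, t) (0, t0) < d"
    have claim: "\<bar>(\<psi> r t' - r * t' * b) - (\<psi> r t - r * t * b)\<bar> \<le> e * r * \<bar>t' - t\<bar>"
      if t': "dist (r, t') (0, t0) < d" for t'
    proof -
      have sub: "\<bar>(pr (u, t') - t' * b) - (pr (u, t) - t * b)\<bar> \<le> e * \<bar>t' - t\<bar>" if u: "u \<in> {0..r}" for u
      proof -
        have "norm ((pr (u, t') - t' * b) - (pr (u, t) - t * b)) \<le> e * norm (t' - t)"
        proof (rule field_differentiable_bound[where f' = "\<lambda>s. prt (u, s) - b" and S = "closed_segment t t'"])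
          show "((\<lambda>s. pr (u, s) - s * b) has_field_derivative prt (u, x) - b) (at x within closed_segment t t')" for x
            using u by (auto intro!: derivative_eq_intros has_field_derivative_at_within[OF F5])
          show "norm (prt (u, x) - b) \<le> e" if "x \<in> closed_segment t t'" for x
          proof -
            have "dist (u, x) (0, t0) < d" using dist_seg[OF _ _ that rt t', of u] u by auto
            from dd[OF _ this, of "(0,1)" "(1,0)"] u show ?thesis by (simp add: prt_def b_def)
          qed
        qed auto
        then show ?thesis by simp
      qed
      have "norm ((\<psi> r t' - \<psi> r t - r * (t' - t) * b) - (\<psi> 0 t' - \<psi> 0 t - 0 * (t' - t) * b)) \<le> (e * \<bar>t' - t\<bar>) * norm (r - 0)"
      proof (rule field_differentiable_bound[where f' = "\<lambda>u. pr (u, t') - pr (u, t) - (t' - t) * b" and S = "{0..r}"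
            and f = "\<lambda>u. \<psi> u t' - \<psi> u t - u * (t' - t) * b"])
        show "((\<lambda>u. \<psi> u t' - \<psi> u t - u * (t' - t) * b) has_field_derivative pr (x, t') - pr (x, t) - (t' - t) * b) (at x within {0..r})"
          if "x \<in> {0..r}" for x
          using that by (auto intro!: derivative_eq_intros DERIV_subset[OF F1])
        show "norm (pr (x, t') - pr (x, t) - (t' - t) * b) \<le> e * \<bar>t' - t\<bar>" if "x \<in> {0..r}" for x
          using sub[OF that] by (simp add: algebra_simps)
      qed (use r in auto)
      then show ?thesis using r by (simp add: psi0 algebra_simps)
    qed
    have "\<bar>pt (r, t) - r * b\<bar> \<le> e * r"
    proof (rule deriv_lip_bound[where \<phi> = "\<lambda>s. \<psi> r s - r * s * b"])
      show "((\<lambda>s. \<psi> r s - r * s * b) has_real_derivative pt (r, t) - r * b) (at t)"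
        using r by (auto intro!: derivative_eq_intros F4)
      have "((\<lambda>s. dist (r, s) (0, t0)) \<longlongrightarrow> dist (r, t) (0, t0)) (at t)"
        by (intro tendsto_intros)
      then have "\<forall>\<^sub>F s in at t. dist (r, s) (0, t0) < d" using rt by (rule order_tendstoD)
      then show "\<forall>\<^sub>F t' in at t. \<bar>(\<psi> r t' - r * t' * b) - (\<psi> r t - r * t * b)\<bar> \<le> e * r * \<bar>t' - t\<bar>"
        by eventually_elim (rule claim)
    qed
    then show "\<bar>pt (r, t) - r * prt (0, t0)\<bar> \<le> e * r" by (simp add: b_def)
  qed
qed

definition "Ag w = \<psi> (fst w) (snd w) / fst w"
definition "Bg w = (pr w - Ag w) / fst w"
definition "Cg w = pt w / fst w"

lemma lim_Bg: "(Bg \<longlongrightarrow> 0) (at (0, t0) within {0<..} \<times> UNIV)"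
proof (rule tendstoI)
  fix e :: real assume e: "e > 0"
  obtain d where d: "d > 0" and dd: "\<And>r t. 0 < r \<Longrightarrow> dist (r, t) (0, t0) < d \<Longrightarrow> \<bar>\<psi> r t - r * pr (r, t)\<bar> \<le> (e/2) * r^2"
    using E1[of "e/2" t0] e by auto
  show "\<forall>\<^sub>F w in at (0, t0) within {0<..} \<times> UNIV. dist (Bg w) 0 < e"
    unfolding eventually_at
  proof (intro exI[of _ d] conjI d ballI impI allI)
    fix w :: R2 assume w: "w \<in> {0<..} \<times> UNIV" "w \<noteq> (0, t0) \<and> dist w (0, t0) < d"
    obtain r t where wrt: "w = (r, t)" by (cases w)
    with w have r: "r > 0" by auto
    have "\<bar>\<psi> r t - r * pr (r, t)\<bar> \<le> (e/2) * r^2" using dd[OF r] w wrt by auto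
    moreover have "Bg w = - (\<psi> r t - r * pr (r, t)) / r^2"
      using r by (simp add: Bg_def Ag_def wrt field_simps power2_eq_square)
    ultimately have "\<bar>Bg w\<bar> \<le> e / 2" using r by (simp add: abs_divide divide_le_eq mult.commute abs_minus_commute)
    then show "dist (Bg w) 0 < e" using e by simp
  qed
qed

lemma lim_Cg: "(Cg \<longlongrightarrow> prt (0, t0)) (at (0, t0) within {0<..} \<times> UNIV)"
proof (rule tendstoI)
  fix e :: real assume e: "e > 0"
  obtain d where d: "d > 0" and dd: "\<And>r t. 0 < r \<Longrightarrow> dist (r, t) (0, t0) < d \<Longrightarrow> \<bar>pt (r, t) - r * prt (0, t0)\<bar> \<le> (e/2) * r"
    using E2[of "e/2" t0] e by auto
  show "\<forall>\<^sub>F w in at (0, t0) within {0<..} \<times> UNIV. dist (Cg w) (prt (0, t0)) < e"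
    unfolding eventually_at
  proof (intro exI[of _ d] conjI d ballI impI allI)
    fix w :: R2 assume w: "w \<in> {0<..} \<times> UNIV" "w \<noteq> (0, t0) \<and> dist w (0, t0) < d"
    obtain r t where wrt: "w = (r, t)" by (cases w)
    with w have r: "r > 0" by auto
    have "\<bar>pt (r, t) - r * prt (0, t0)\<bar> \<le> (e/2) * r" using dd[OF r] w wrt by auto
    moreover have "Cg w - prt (0, t0) = (pt (r, t) - r * prt (0, t0)) / r"
      using r by (simp add: Cg_def wrt field_simps)
    ultimately have "\<bar>Cg w - prt (0, t0)\<bar> \<le> e / 2" using r by (simp add: abs_divide divide_le_eq mult.commute)
    then show "dist (Cg w) (prt (0, t0)) < e" using e by (simp add: dist_real_def)
  qed
qed
end



context rad begin

lemma int_H: "0 < fst w \<Longrightarrow> at w within {0::real..} \<times> (UNIV::real set) = at w"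
  by (rule at_within_interior) (cases w, auto simp: interior_Times)

lemma dP_at: "0 < fst w \<Longrightarrow> ((\<lambda>w. \<psi> (fst w) (snd w)) has_derivative blinfun_apply (Dp w)) (at w)"
  using dP[of w] int_H[of w] by (cases w) (auto simp: split_beta')

lemma dPr_at: "0 < fst w \<Longrightarrow> (pr has_derivative (\<lambda>v. DDp w v (1, 0))) (at w)"
  using dPr[of w] int_H[of w] by (cases w) auto

lemma dPt_at: "0 < fst w \<Longrightarrow> (pt has_derivative (\<lambda>v. DDp w v (0, 1))) (at w)"
  using dPt[of w] int_H[of w] by (cases w) auto

lemma dDp_at: "0 < fst w \<Longrightarrow> (Dp has_derivative blinfun_apply (DDp w)) (at w)"
  using dDp[of w] int_H[of w] by (cases w) auto

lemma cDDp_at: "0 < fst w \<Longrightarrow> isCont DDp w"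
  using cDDp int_H[of w] unfolding continuous_on_def isCont_def
  by (cases w) (metis SigmaI UNIV_I atLeast_iff less_imp_le fst_conv)

lemma cDp_at: "0 < fst w \<Longrightarrow> isCont Dp w"
  using has_derivative_continuous[OF dDp_at] by simp

lemma cP_at: "0 < fst w \<Longrightarrow> isCont (\<lambda>w. \<psi> (fst w) (snd w)) w"
  using has_derivative_continuous[OF dP_at] by simp

lemma Dp_lin: "blinfun_apply (Dp w) (a, b) = a * pr w + b * pt w"
  unfolding pr_def pt_def by (subst lin2) simp

lemma DDp_lin1: "blinfun_apply (blinfun_apply (DDp w) (a, b)) (1, 0) = a * prr w + b * prt w"
  unfolding prr_def prt_def by (subst lin2) (simp add: blinfun.scaleR_left blinfun.add_left)

lemma DDp_lin2: "blinfun_apply (blinfun_apply (DDp w) (a, b)) (0, 1) = a * ptr w + b * ptt w"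
  unfolding ptr_def ptt_def by (subst lin2) (simp add: blinfun.scaleR_left blinfun.add_left)

lemma dAg: "0 < fst w \<Longrightarrow> (Ag has_derivative (\<lambda>v. Bg w * fst v + Cg w * snd v)) (at w)"
  unfolding Ag_def[abs_def]
  by (auto intro!: derivative_eq_intros dP_at ext simp: Dp_lin Bg_def Cg_def Ag_def field_simps power2_eq_square split_beta')

lemma dBg: "0 < fst w \<Longrightarrow> (Bg has_derivative (\<lambda>v. ((prr w - 2 * Bg w) * fst v + (prt w - Cg w) * snd v) / fst w)) (at w)"
proof -
  assume w: "0 < fst w"
  have "((\<lambda>w. (pr w - Ag w) / fst w) has_derivative (\<lambda>v. ((prr w - 2 * Bg w) * fst v + (prt w - Cg w) * snd v) / fst w)) (at w)"
    using w by (auto intro!: derivative_eq_intros dPr_at dAg ext simp: DDp_lin1 Bg_def field_simps power2_eq_square split_beta')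
  then show ?thesis by (simp add: Bg_def[abs_def])
qed

lemma dCg: "0 < fst w \<Longrightarrow> (Cg has_derivative (\<lambda>v. ((ptr w - Cg w) * fst v + ptt w * snd v) / fst w)) (at w)"
proof -
  assume w: "0 < fst w"
  have "((\<lambda>w. pt w / fst w) has_derivative (\<lambda>v. ((ptr w - Cg w) * fst v + ptt w * snd v) / fst w)) (at w)"
    using w by (auto intro!: derivative_eq_intros dPt_at ext simp: DDp_lin2 Cg_def field_simps power2_eq_square split_beta')
  then show ?thesis by (simp add: Cg_def[abs_def])
qed

lemma cAg: "0 < fst w \<Longrightarrow> isCont Ag w" using has_derivative_continuous[OF dAg] by simp
lemma cBg: "0 < fst w \<Longrightarrow> isCont Bg w" using has_derivative_continuous[OF dBg] by simp
lemma cCg: "0 < fst w \<Longrightarrow> isCont Cg w" using has_derivative_continuous[OF dCg] by simp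
lemma cprr: "0 < fst w \<Longrightarrow> isCont prr w" unfolding prr_def[abs_def]
  using cDDp_at[of w] by (auto intro!: continuous_intros)
lemma cprt: "0 < fst w \<Longrightarrow> isCont prt w" unfolding prt_def[abs_def]
  using cDDp_at[of w] by (auto intro!: continuous_intros)
lemma cptr: "0 < fst w \<Longrightarrow> isCont ptr w" unfolding ptr_def[abs_def]
  using cDDp_at[of w] by (auto intro!: continuous_intros)
lemma cptt: "0 < fst w \<Longrightarrow> isCont ptt w" unfolding ptt_def[abs_def]
  using cDDp_at[of w] by (auto intro!: continuous_intros)

lemma DDp_lim: "(DDp \<longlongrightarrow> DDp (0, t0)) (at (0, t0) within {0<..} \<times> UNIV)"
proof -
  have "(DDp \<longlongrightarrow> DDp (0, t0)) (at (0, t0) within {0..} \<times> UNIV)"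
    using cDDp unfolding continuous_on_def by auto
  then show ?thesis by (rule tendsto_within_subset) auto
qed

lemma Dp_lim: "(Dp \<longlongrightarrow> Dp (0, t0)) (at (0, t0) within {0<..} \<times> UNIV)"
proof -
  have "continuous (at (0, t0) within {0..} \<times> UNIV) Dp"
    by (rule has_derivative_continuous[OF dDp]) auto
  then have "(Dp \<longlongrightarrow> Dp (0, t0)) (at (0, t0) within {0..} \<times> UNIV)"
    by (simp add: continuous_within)
  then show ?thesis by (rule tendsto_within_subset) auto
qed

lemma lim_prr: "(prr \<longlongrightarrow> 0) (at (0, t0) within {0<..} \<times> UNIV)"
proof -
  have "(prr \<longlongrightarrow> prr (0, t0)) (at (0, t0) within {0<..} \<times> UNIV)"
    unfolding prr_def[abs_def] by (intro blinfun.tendsto DDp_lim tendsto_const)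
  then show ?thesis by (simp add: prr_def prr0)
qed

lemma lim_prt: "(prt \<longlongrightarrow> prt (0, t0)) (at (0, t0) within {0<..} \<times> UNIV)"
  unfolding prt_def[abs_def] by (intro blinfun.tendsto DDp_lim tendsto_const)

lemma lim_ptr0: "(ptr \<longlongrightarrow> ptr (0, t0)) (at (0, t0) within {0<..} \<times> UNIV)"
  unfolding ptr_def[abs_def] by (intro blinfun.tendsto DDp_lim tendsto_const)

lemma lim_ptt: "(ptt \<longlongrightarrow> 0) (at (0, t0) within {0<..} \<times> UNIV)"
proof -
  have "(ptt \<longlongrightarrow> ptt (0, t0)) (at (0, t0) within {0<..} \<times> UNIV)"
    unfolding ptt_def[abs_def] by (intro blinfun.tendsto DDp_lim tendsto_const)
  then show ?thesis by (simp add: ptt0)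
qed

lemma lim_pr: "(pr \<longlongrightarrow> pr (0, t0)) (at (0, t0) within {0<..} \<times> UNIV)"
  unfolding pr_def[abs_def] by (intro blinfun.tendsto Dp_lim tendsto_const)

lemma lim_Ag: "(Ag \<longlongrightarrow> pr (0, t0)) (at (0, t0) within {0<..} \<times> UNIV)"
proof -
  have eq: "Ag w = pr w - fst w * Bg w" if "w \<in> {0<..} \<times> UNIV" for w
    using that by (auto simp: Bg_def)
  have "((\<lambda>w. pr w - fst w * Bg w) \<longlongrightarrow> pr (0, t0) - 0 * 0) (at (0, t0) within {0<..} \<times> UNIV)"
  proof -
    have f0: "((\<lambda>w::R2. fst w) \<longlongrightarrow> 0) (at (0, t0) within {0<..} \<times> UNIV)"
      using tendsto_fst[OF tendsto_ident_at[of "(0::real, t0)" "{0<..} \<times> UNIV"]] by simp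
    show ?thesis by (intro tendsto_intros lim_pr lim_Bg f0)
  qed
  moreover have "\<forall>\<^sub>F w in at (0, t0) within {0<..} \<times> UNIV. Ag w = pr w - fst w * Bg w"
    unfolding eventually_at_filter by (rule always_eventually) (auto simp: eq)
  ultimately show ?thesis using tendsto_cong by force
qed

lemma sym0: "ptr (0, t0) = prt (0, t0)"
proof -
  have "((\<lambda>u. (pt (u, t0) - pt (0, t0)) / (u - 0)) \<longlongrightarrow> ptr (0, t0)) (at 0 within {0..})"
    using F3[of 0 t0] unfolding has_field_derivative_iff by simp
  then have 1: "((\<lambda>u. pt (u, t0) / u) \<longlongrightarrow> ptr (0, t0)) (at_right 0)"
    by (simp add: pt0) (rule tendsto_within_subset, auto)
  have f: "filterlim (\<lambda>u. (u, t0)) (at (0, t0) within {0<..} \<times> UNIV) (at_right 0)"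
    by (rule filterlim_at_withinI) (auto intro!: tendsto_eq_intros simp: eventually_at_filter)
  have "((\<lambda>u. Cg (u, t0)) \<longlongrightarrow> prt (0, t0)) (at_right 0)"
    using filterlim_compose[OF lim_Cg f] by (simp add: o_def)
  then have 2: "((\<lambda>u. pt (u, t0) / u) \<longlongrightarrow> prt (0, t0)) (at_right 0)"
    by (simp add: Cg_def)
  show ?thesis using tendsto_unique[OF _ 1 2] by simp
qed

lemma lim_ptr: "(ptr \<longlongrightarrow> prt (0, t0)) (at (0, t0) within {0<..} \<times> UNIV)"
  using lim_ptr0 sym0 by simp

end



definition outer :: "real^3 \<Rightarrow> 'c::real_normed_vector \<Rightarrow> (V \<Rightarrow>\<^sub>L 'c)" where
  "outer y x = blinfun_scaleR_left x o\<^sub>L blinfun_inner_left y o\<^sub>L fst_blinfun"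

lemma outer_apply[simp]: "blinfun_apply (outer y x) v = (fst v \<bullet> y) *\<^sub>R x"
  by (simp add: outer_def)

definition tc :: "'c::real_normed_vector \<Rightarrow> (V \<Rightarrow>\<^sub>L 'c)" where
  "tc x = blinfun_scaleR_left x o\<^sub>L snd_blinfun"

lemma tc_apply[simp]: "blinfun_apply (tc x) v = snd v *\<^sub>R x"
  by (simp add: tc_def)

abbreviation pi1 :: "V \<Rightarrow>\<^sub>L (real^3)" where "pi1 \<equiv> fst_blinfun"

lemma outer_bb: "bounded_bilinear (outer :: real^3 \<Rightarrow> 'c::real_normed_vector \<Rightarrow> (V \<Rightarrow>\<^sub>L 'c))"
proof
  show "outer (a + a') b = outer a b + outer a' b" for a a' :: "real^3" and b :: 'c
    by (rule blinfun_eqI) (simp add: inner_add_right scaleR_add_left blinfun.add_left)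
  show "outer a (b + b') = outer a b + outer a b'" for a :: "real^3" and b b' :: 'c
    by (rule blinfun_eqI) (simp add: scaleR_add_right blinfun.add_left)
  show "outer (r *\<^sub>R a) b = r *\<^sub>R outer a b" for r and a :: "real^3" and b :: 'c
    by (rule blinfun_eqI) (simp add: blinfun.scaleR_left)
  show "outer a (r *\<^sub>R b) = r *\<^sub>R outer a b" for r and a :: "real^3" and b :: 'c
    by (rule blinfun_eqI) (simp add: blinfun.scaleR_left)
  show "\<exists>K. \<forall>a b. norm (outer a b :: V \<Rightarrow>\<^sub>L 'c) \<le> norm a * norm b * K"
  proof (intro exI[of _ 1] allI)
    fix a :: "real^3" and b :: 'c
    show "norm (outer a b :: V \<Rightarrow>\<^sub>L 'c) \<le> norm a * norm b * 1"
    proof (simp, rule norm_blinfun_bound)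
      fix v :: V
      have "norm ((fst v \<bullet> a) *\<^sub>R b) = \<bar>fst v \<bullet> a\<bar> * norm b" by simp
      also have "\<dots> \<le> (norm (fst v) * norm a) * norm b"
        by (intro mult_right_mono Cauchy_Schwarz_ineq2) auto
      also have "\<dots> \<le> (norm v * norm a) * norm b"
        by (intro mult_right_mono) (auto simp: norm_fst_le[of "fst v" "snd v", simplified])
      finally show "norm (outer a b v) \<le> norm a * norm b * norm v" by (simp add: ac_simps)
    qed simp
  qed
qed

lemma tc_bl: "bounded_linear (tc :: 'c::real_normed_vector \<Rightarrow> (V \<Rightarrow>\<^sub>L 'c))"
proof
  show "tc (b + b') = tc b + tc b'" for b b' :: 'c
    by (rule blinfun_eqI) (simp add: scaleR_add_right blinfun.add_left)
  show "tc (r *\<^sub>R b) = r *\<^sub>R tc b" for r and b :: 'c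
    by (rule blinfun_eqI) (simp add: blinfun.scaleR_left)
  show "\<exists>K. \<forall>b. norm (tc b :: V \<Rightarrow>\<^sub>L 'c) \<le> norm b * K"
  proof (intro exI[of _ 1] allI)
    fix b :: 'c
    show "norm (tc b :: V \<Rightarrow>\<^sub>L 'c) \<le> norm b * 1"
    proof (simp, rule norm_blinfun_bound)
      fix v :: V
      have "norm (snd v *\<^sub>R b) = \<bar>snd v\<bar> * norm b" by simp
      also have "\<dots> \<le> norm v * norm b"
        by (intro mult_right_mono) (auto simp: norm_snd_le[of "snd v" "fst v", simplified])
      finally show "norm (tc b v) \<le> norm b * norm v" by (simp add: ac_simps)
    qed simp
  qed
qed

context rad begin

definition N :: "V \<Rightarrow> R2" where "N z = (norm (fst z), snd z)"

lemma dN: "fst z \<noteq> 0 \<Longrightarrow> (N has_derivative (\<lambda>v. (fst z \<bullet> fst v / norm (fst z), snd v))) (at z)"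
  unfolding N_def[abs_def]
  by (auto intro!: derivative_eq_intros has_derivative_compose[OF _ has_derivative_norm] ext
        simp: sgn_div_norm inner_commute field_simps)

definition "a z = Ag (N z)"
definition "bq z = Bg (N z) / norm (fst z)"
definition "c z = Cg (N z)"

lemma NP: "fst z \<noteq> 0 \<Longrightarrow> 0 < fst (N z)" by (simp add: N_def)

lemma da: "fst z \<noteq> 0 \<Longrightarrow> (a has_derivative
   (\<lambda>v. Bg (N z) * (fst z \<bullet> fst v / norm (fst z)) + Cg (N z) * snd v)) (at z)"
  unfolding a_def[abs_def]
  using has_derivative_compose[OF dN dAg[OF NP]] by simp

lemma db: "fst z \<noteq> 0 \<Longrightarrow> ((\<lambda>z. Bg (N z)) has_derivative
   (\<lambda>v. ((prr (N z) - 2 * Bg (N z)) * (fst z \<bullet> fst v / norm (fst z)) + (prt (N z) - Cg (N z)) * snd v) / norm (fst z))) (at z)"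
  using has_derivative_compose[OF dN dBg[OF NP]] by (simp add: N_def)

lemma dc: "fst z \<noteq> 0 \<Longrightarrow> (c has_derivative
   (\<lambda>v. ((ptr (N z) - Cg (N z)) * (fst z \<bullet> fst v / norm (fst z)) + ptt (N z) * snd v) / norm (fst z))) (at z)"
  unfolding c_def[abs_def]
  using has_derivative_compose[OF dN dCg[OF NP]] by (simp add: N_def)

lemma dbq: "fst z \<noteq> 0 \<Longrightarrow> (bq has_derivative
   (\<lambda>v. ((prr (N z) - 3 * Bg (N z)) * (fst z \<bullet> fst v / norm (fst z)) + (prt (N z) - Cg (N z)) * snd v) / (norm (fst z))^2)) (at z)"
  unfolding bq_def[abs_def]
  by (auto intro!: derivative_eq_intros db has_derivative_compose[OF _ has_derivative_norm] ext
        simp: sgn_div_norm inner_commute field_simps power2_eq_square)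


definition D1g :: "V \<Rightarrow> (V \<Rightarrow>\<^sub>L (real^3))" where
  "D1g z = a z *\<^sub>R pi1 + bq z *\<^sub>R outer (fst z) (fst z) + c z *\<^sub>R tc (fst z)"

definition D2' :: "V \<Rightarrow> V \<Rightarrow> (V \<Rightarrow>\<^sub>L (real^3))" where
  "D2' z v =
   (Bg (N z) * (fst z \<bullet> fst v / norm (fst z)) + Cg (N z) * snd v) *\<^sub>R pi1
   + (((prr (N z) - 3 * Bg (N z)) * (fst z \<bullet> fst v / norm (fst z)) + (prt (N z) - Cg (N z)) * snd v) / (norm (fst z))^2) *\<^sub>R outer (fst z) (fst z)
   + bq z *\<^sub>R (outer (fst v) (fst z) + outer (fst z) (fst v))
   + (((ptr (N z) - Cg (N z)) * (fst z \<bullet> fst v / norm (fst z)) + ptt (N z) * snd v) / norm (fst z)) *\<^sub>R tc (fst z)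
   + c z *\<^sub>R tc (fst v)"

lemma open_good: "open {z::V. fst z \<noteq> 0}"
  by (rule open_Collect_neq) (auto intro: continuous_intros)

lemma dD1g: "fst z \<noteq> 0 \<Longrightarrow> (D1g has_derivative D2' z) (at z)"
  unfolding D1g_def[abs_def]
  apply (rule has_derivative_eq_rhs)
   apply (rule refl | rule derivative_eq_intros da dbq dc bounded_bilinear.FDERIV[OF outer_bb] bounded_linear.has_derivative[OF tc_bl] has_derivative_fst has_derivative_ident | assumption)+
  apply (rule ext, rule blinfun_eqI)
  apply (simp add: D2'_def blinfun.add_left blinfun.scaleR_left bounded_bilinear.add_left[OF outer_bb] algebra_simps)
  done

definition "Uf z = (if fst z = 0 then 0 else a z *\<^sub>R fst z)"

lemma dU: "fst z \<noteq> 0 \<Longrightarrow> (Uf has_derivative blinfun_apply (D1g z)) (at z)"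
proof -
  assume z: "fst z \<noteq> 0"
  have "((\<lambda>z. a z *\<^sub>R fst z) has_derivative blinfun_apply (D1g z)) (at z)"
    apply (rule has_derivative_eq_rhs)
     apply (rule refl | rule derivative_eq_intros da has_derivative_fst has_derivative_ident z | assumption)+
    apply (rule ext)
    using z apply (simp add: D1g_def bq_def c_def blinfun.add_left blinfun.scaleR_left algebra_simps inner_commute)
    done
  then show ?thesis
    by (rule has_derivative_transform_within_open[OF _ open_good]) (use z in \<open>auto simp: Uf_def\<close>)
qed

end



lemma tendsto_bl1:
  fixes D :: "'x \<Rightarrow> ('a::euclidean_space \<Rightarrow>\<^sub>L 'c::real_normed_vector)"
  assumes "\<And>v. ((\<lambda>z. blinfun_apply (D z) v) \<longlongrightarrow> blinfun_apply L v) F"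
  shows "(D \<longlongrightarrow> L) F"
  using assms by (intro tendsto_componentwise1)

lemma tendsto_bl2:
  fixes D :: "'x \<Rightarrow> ('a::euclidean_space \<Rightarrow>\<^sub>L ('b::euclidean_space \<Rightarrow>\<^sub>L 'c::real_normed_vector))"
  assumes "\<And>v w. ((\<lambda>z. blinfun_apply (blinfun_apply (D z) v) w) \<longlongrightarrow> blinfun_apply (blinfun_apply L v) w) F"
  shows "(D \<longlongrightarrow> L) F"
  using assms by (intro tendsto_componentwise1)

context rad begin

abbreviation "Good \<equiv> {z::V. fst z \<noteq> 0}"

lemma Nlim: "filterlim N (at (0, t0) within {0<..} \<times> UNIV) (at (0::real^3, t0) within Good)"
proof (rule filterlim_at_withinI)
  show "(N \<longlongrightarrow> (0, t0)) (at (0, t0) within Good)"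
  proof -
    have "((\<lambda>z::V. (norm (fst z), snd z)) \<longlongrightarrow> (norm (fst (0::real^3, t0)), snd (0::real^3, t0))) (at (0, t0) within Good)"
      by (intro tendsto_intros tendsto_ident_at)
    then show ?thesis by (simp add: N_def[abs_def])
  qed
  show "\<forall>\<^sub>F z in at (0, t0) within Good. N z \<in> {0<..} \<times> UNIV - {(0, t0)}"
    unfolding eventually_at_filter by (rule always_eventually) (auto simp: N_def)
qed

lemma limN: "(f \<longlongrightarrow> L) (at (0, t0) within {0<..} \<times> UNIV) \<Longrightarrow> ((\<lambda>z. f (N z)) \<longlongrightarrow> L) (at (0::real^3, t0) within Good)"
  by (rule filterlim_compose[OF _ Nlim])

lemma lim_r: "((\<lambda>z::V. norm (fst z)) \<longlongrightarrow> 0) (at (0, t0) within Good)"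
proof -
  have "((\<lambda>z::V. norm (fst z)) \<longlongrightarrow> norm (fst (0::real^3, t0))) (at (0, t0) within Good)"
    by (intro tendsto_intros tendsto_ident_at)
  then show ?thesis by simp
qed

lemma lim_x: "((\<lambda>z::V. fst z) \<longlongrightarrow> 0) (at (0, t0) within Good)"
proof -
  have "((\<lambda>z::V. fst z) \<longlongrightarrow> fst (0::real^3, t0)) (at (0, t0) within Good)"
    by (intro tendsto_intros tendsto_ident_at)
  then show ?thesis by simp
qed

lemma ev_good: "(\<And>z. fst z \<noteq> 0 \<Longrightarrow> P z) \<Longrightarrow> \<forall>\<^sub>F z in at b within Good. P z"
  unfolding eventually_at_filter by (rule always_eventually) auto

lemma U_lim: "(Uf \<longlongrightarrow> 0) (at (0, t0) within Good)"
proof -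
  have "((\<lambda>z. a z *\<^sub>R fst z) \<longlongrightarrow> pr (0, t0) *\<^sub>R 0) (at (0, t0) within Good)"
    unfolding a_def by (intro tendsto_intros limN lim_Ag lim_x)
  moreover have "\<forall>\<^sub>F z in at (0, t0) within Good. Uf z = a z *\<^sub>R fst z"
    by (rule ev_good) (simp add: Uf_def)
  ultimately show ?thesis using tendsto_cong by force
qed

definition D1 :: "V \<Rightarrow> (V \<Rightarrow>\<^sub>L (real^3))" where
  "D1 z = (if fst z = 0 then pr (0, snd z) *\<^sub>R pi1 else D1g z)"

lemma inner_bound: "x \<noteq> 0 \<Longrightarrow> \<bar>(x::real^3) \<bullet> v\<bar> / norm x \<le> norm v"
  using Cauchy_Schwarz_ineq2[of x v] by (simp add: divide_le_eq mult.commute)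

lemma D1_lim: "(D1 \<longlongrightarrow> D1 (0, t0)) (at (0, t0) within Good)"
proof (rule tendsto_bl1)
  fix v :: V
  have eq: "\<forall>\<^sub>F z in at (0, t0) within Good. D1 z v =
      a z *\<^sub>R fst v + (Bg (N z) * ((fst v \<bullet> fst z) / norm (fst z))) *\<^sub>R fst z + (c z * snd v) *\<^sub>R fst z"
    by (rule ev_good) (simp add: D1_def D1g_def bq_def blinfun.add_left blinfun.scaleR_left)
  have t2: "((\<lambda>z. (Bg (N z) * ((fst v \<bullet> fst z) / norm (fst z))) *\<^sub>R fst z) \<longlongrightarrow> 0) (at (0, t0) within Good)"
  proof (rule tendsto_0_le[where f = "\<lambda>z. Bg (N z) * norm (fst z)" and K = "norm (fst v)"])
    show "((\<lambda>z. Bg (N z) * norm (fst z)) \<longlongrightarrow> 0) (at (0, t0) within Good)"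
      using tendsto_mult[OF limN[OF lim_Bg] lim_r] by simp
    show "\<forall>\<^sub>F z in at (0, t0) within Good. norm ((Bg (N z) * ((fst v \<bullet> fst z) / norm (fst z))) *\<^sub>R fst z)
        \<le> norm (Bg (N z) * norm (fst z)) * norm (fst v)"
    proof (rule ev_good)
      fix z :: V assume z: "fst z \<noteq> 0"
      have "norm ((Bg (N z) * ((fst v \<bullet> fst z) / norm (fst z))) *\<^sub>R fst z)
          = \<bar>Bg (N z)\<bar> * (\<bar>fst z \<bullet> fst v\<bar> / norm (fst z)) * norm (fst z)"
        by (simp add: abs_mult inner_commute)
      also have "\<dots> \<le> \<bar>Bg (N z)\<bar> * norm (fst v) * norm (fst z)"
        using inner_bound[OF z, of "fst v"] by (intro mult_right_mono mult_left_mono) auto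
      finally show "norm ((Bg (N z) * ((fst v \<bullet> fst z) / norm (fst z))) *\<^sub>R fst z)
        \<le> norm (Bg (N z) * norm (fst z)) * norm (fst v)" by (simp add: abs_mult ac_simps)
    qed
  qed
  have "((\<lambda>z. a z *\<^sub>R fst v + (Bg (N z) * ((fst v \<bullet> fst z) / norm (fst z))) *\<^sub>R fst z + (c z * snd v) *\<^sub>R fst z)
      \<longlongrightarrow> pr (0, t0) *\<^sub>R fst v + 0 + (prt (0, t0) * snd v) *\<^sub>R 0) (at (0, t0) within Good)"
    unfolding a_def c_def by (intro tendsto_intros limN lim_Ag lim_Cg lim_x t2)
  then have "((\<lambda>z. D1 z v) \<longlongrightarrow> pr (0, t0) *\<^sub>R fst v) (at (0, t0) within Good)"
    using tendsto_cong[OF eq] by simp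
  then show "((\<lambda>z. D1 z v) \<longlongrightarrow> D1 (0, t0) v) (at (0, t0) within Good)"
    by (simp add: D1_def blinfun.scaleR_left)
qed

end



lemma coef_bound:
  fixes A B e k n :: real
  assumes "\<bar>e\<bar> \<le> n"
  shows "\<bar>A * e + B * k\<bar> \<le> (\<bar>A\<bar> + \<bar>B\<bar>) * (n + \<bar>k\<bar>)"
proof -
  have "\<bar>A * e + B * k\<bar> \<le> \<bar>A\<bar> * \<bar>e\<bar> + \<bar>B\<bar> * \<bar>k\<bar>" by (metis abs_mult abs_triangle_ineq)
  also have "\<dots> \<le> \<bar>A\<bar> * n + \<bar>B\<bar> * \<bar>k\<bar>" using assms by (simp add: mult_left_mono)
  also have "\<dots> \<le> (\<bar>A\<bar> + \<bar>B\<bar>) * (n + \<bar>k\<bar>)" using assms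
    by (simp add: algebra_simps)
  finally show ?thesis .
qed

context rad begin

lemma M_bl: "bounded_linear (\<lambda>v::V. blinfun_apply (tc pi1) v + tc (fst v))"
  by (intro bounded_linear_add blinfun.bounded_linear_right bounded_linear_compose[OF tc_bl bounded_linear_fst])

definition M :: "V \<Rightarrow>\<^sub>L (V \<Rightarrow>\<^sub>L (real^3))" where
  "M = Blinfun (\<lambda>v. tc pi1 v + tc (fst v))"

lemma M_apply: "blinfun_apply M v = tc pi1 v + tc (fst v)"
  unfolding M_def using bounded_linear_Blinfun_apply[OF M_bl] by simp

definition D2 :: "V \<Rightarrow> (V \<Rightarrow>\<^sub>L (V \<Rightarrow>\<^sub>L (real^3)))" where
  "D2 z = (if fst z = 0 then prt (0, snd z) *\<^sub>R M else Blinfun (D2' z))"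

lemma D2_good: "fst z \<noteq> 0 \<Longrightarrow> blinfun_apply (D2 z) = D2' z"
  unfolding D2_def using bounded_linear_Blinfun_apply[OF has_derivative_bounded_linear[OF dD1g]] by simp

lemma D2_lim: "(D2 \<longlongrightarrow> D2 (0, t0)) (at (0, t0) within Good)"
proof (rule tendsto_bl2)
  fix v w :: V
  define b where "b = prt (0, t0)"
  define v1 where "v1 = fst v"
  define w1 where "w1 = fst w"
  define k where "k = snd v"
  define \<tau> where "\<tau> = snd w"
  let ?F = "at (0::real^3, t0) within Good"
  let ?e = "\<lambda>z::V. fst z \<bullet> v1 / norm (fst z)"
  define G1 where "G1 z = (Bg (N z) * ?e z) *\<^sub>R w1" for z
  define G2 where "G2 z = (((prr (N z) - 3 * Bg (N z)) * ?e z + (prt (N z) - Cg (N z)) * k) / (norm (fst z))^2) *\<^sub>R ((w1 \<bullet> fst z) *\<^sub>R fst z)" for z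
  define G3 where "G3 z = bq z *\<^sub>R ((w1 \<bullet> v1) *\<^sub>R fst z + (w1 \<bullet> fst z) *\<^sub>R v1)" for z
  define G4 where "G4 z = (((ptr (N z) - Cg (N z)) * ?e z + ptt (N z) * k) / norm (fst z)) *\<^sub>R (\<tau> *\<^sub>R fst z)" for z
  define G5 where "G5 z = (Cg (N z) * k) *\<^sub>R w1 + c z *\<^sub>R (\<tau> *\<^sub>R v1)" for z
  have eq: "\<forall>\<^sub>F z in ?F. D2 z v w = G1 z + G2 z + G3 z + G4 z + G5 z"
  proof (rule ev_good)
    fix z :: V assume z: "fst z \<noteq> 0"
    show "D2 z v w = G1 z + G2 z + G3 z + G4 z + G5 z"
      using z by (simp add: D2_good D2'_def G1_def G2_def G3_def G4_def G5_def v1_def w1_def k_def \<tau>_def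
         blinfun.add_left blinfun.scaleR_left algebra_simps inner_commute)
  qed
  have ie: "\<bar>?e z\<bar> \<le> norm v1" if "fst z \<noteq> 0" for z
    using inner_bound[OF that, of v1] by (simp add: abs_divide)
  have iw: "\<bar>w1 \<bullet> fst z\<bar> \<le> norm w1 * norm (fst z)" for z
    using Cauchy_Schwarz_ineq2 .
  have l1: "(G1 \<longlongrightarrow> 0) ?F"
  proof (rule tendsto_0_le[where f = "\<lambda>z. Bg (N z)" and K = "norm v1 * norm w1"])
    show "((\<lambda>z. Bg (N z)) \<longlongrightarrow> 0) ?F" by (intro limN lim_Bg)
    show "\<forall>\<^sub>F z in ?F. norm (G1 z) \<le> norm (Bg (N z)) * (norm v1 * norm w1)"
    proof (rule ev_good)
      fix z :: V assume z: "fst z \<noteq> 0"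
      have "norm (G1 z) = \<bar>Bg (N z)\<bar> * \<bar>?e z\<bar> * norm w1" by (simp add: G1_def abs_mult)
      also have "\<dots> \<le> \<bar>Bg (N z)\<bar> * norm v1 * norm w1"
        using ie[OF z] by (intro mult_right_mono mult_left_mono) auto
      finally show "norm (G1 z) \<le> norm (Bg (N z)) * (norm v1 * norm w1)" by (simp add: ac_simps)
    qed
  qed
  have l2: "(G2 \<longlongrightarrow> 0) ?F"
  proof (rule tendsto_0_le[where f = "\<lambda>z. \<bar>prr (N z) - 3 * Bg (N z)\<bar> + \<bar>prt (N z) - Cg (N z)\<bar>" and K = "(norm v1 + \<bar>k\<bar>) * norm w1"])
    have "((\<lambda>z. \<bar>prr (N z) - 3 * Bg (N z)\<bar> + \<bar>prt (N z) - Cg (N z)\<bar>) \<longlongrightarrow> \<bar>0 - 3 * 0\<bar> + \<bar>b - b\<bar>) ?F"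
      unfolding b_def by (intro tendsto_intros limN lim_Bg lim_prr lim_prt lim_Cg)
    then show "((\<lambda>z. \<bar>prr (N z) - 3 * Bg (N z)\<bar> + \<bar>prt (N z) - Cg (N z)\<bar>) \<longlongrightarrow> 0) ?F" by simp
    show "\<forall>\<^sub>F z in ?F. norm (G2 z) \<le> norm (\<bar>prr (N z) - 3 * Bg (N z)\<bar> + \<bar>prt (N z) - Cg (N z)\<bar>) * ((norm v1 + \<bar>k\<bar>) * norm w1)"
    proof (rule ev_good)
      fix z :: V assume z: "fst z \<noteq> 0"
      define C where "C = (prr (N z) - 3 * Bg (N z)) * ?e z + (prt (N z) - Cg (N z)) * k"
      define S where "S = \<bar>prr (N z) - 3 * Bg (N z)\<bar> + \<bar>prt (N z) - Cg (N z)\<bar>"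
      have r: "norm (fst z) > 0" using z by simp
      have C: "\<bar>C\<bar> \<le> S * (norm v1 + \<bar>k\<bar>)" unfolding C_def S_def by (rule coef_bound[OF ie[OF z]])
      have "norm (G2 z) = \<bar>C\<bar> / (norm (fst z))^2 * (\<bar>w1 \<bullet> fst z\<bar> * norm (fst z))"
        by (simp add: G2_def C_def abs_divide abs_mult)
      also have "\<dots> \<le> \<bar>C\<bar> / (norm (fst z))^2 * (norm w1 * norm (fst z) * norm (fst z))"
        using iw[of z] by (intro mult_left_mono mult_right_mono) auto
      also have "\<dots> = \<bar>C\<bar> * norm w1" using r by (simp add: power2_eq_square)
      also have "\<dots> \<le> S * (norm v1 + \<bar>k\<bar>) * norm w1" using C by (intro mult_right_mono) auto
      finally show "norm (G2 z) \<le> norm (\<bar>prr (N z) - 3 * Bg (N z)\<bar> + \<bar>prt (N z) - Cg (N z)\<bar>) * ((norm v1 + \<bar>k\<bar>) * norm w1)"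
        by (simp add: S_def ac_simps)
    qed
  qed
  have l3: "(G3 \<longlongrightarrow> 0) ?F"
  proof (rule tendsto_0_le[where f = "\<lambda>z. Bg (N z)" and K = "2 * (norm w1 * norm v1)"])
    show "((\<lambda>z. Bg (N z)) \<longlongrightarrow> 0) ?F" by (intro limN lim_Bg)
    show "\<forall>\<^sub>F z in ?F. norm (G3 z) \<le> norm (Bg (N z)) * (2 * (norm w1 * norm v1))"
    proof (rule ev_good)
      fix z :: V assume z: "fst z \<noteq> 0"
      have r: "norm (fst z) > 0" using z by simp
      have "norm ((w1 \<bullet> v1) *\<^sub>R fst z + (w1 \<bullet> fst z) *\<^sub>R v1) \<le> \<bar>w1 \<bullet> v1\<bar> * norm (fst z) + \<bar>w1 \<bullet> fst z\<bar> * norm v1"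
        by (rule order.trans[OF norm_triangle_ineq]) simp
      also have "\<dots> \<le> (norm w1 * norm v1) * norm (fst z) + (norm w1 * norm (fst z)) * norm v1"
        by (intro add_mono mult_right_mono Cauchy_Schwarz_ineq2) auto
      also have "\<dots> = 2 * (norm w1 * norm v1) * norm (fst z)" by (simp add: algebra_simps)
      finally have *: "norm ((w1 \<bullet> v1) *\<^sub>R fst z + (w1 \<bullet> fst z) *\<^sub>R v1) \<le> 2 * (norm w1 * norm v1) * norm (fst z)" .
      have "norm (G3 z) = \<bar>Bg (N z)\<bar> / norm (fst z) * norm ((w1 \<bullet> v1) *\<^sub>R fst z + (w1 \<bullet> fst z) *\<^sub>R v1)"
        by (simp add: G3_def bq_def abs_divide)
      also have "\<dots> \<le> \<bar>Bg (N z)\<bar> / norm (fst z) * (2 * (norm w1 * norm v1) * norm (fst z))"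
        by (intro mult_left_mono *) auto
      also have "\<dots> = \<bar>Bg (N z)\<bar> * (2 * (norm w1 * norm v1))" using r by simp
      finally show "norm (G3 z) \<le> norm (Bg (N z)) * (2 * (norm w1 * norm v1))" by simp
    qed
  qed
  have l4: "(G4 \<longlongrightarrow> 0) ?F"
  proof (rule tendsto_0_le[where f = "\<lambda>z. \<bar>ptr (N z) - Cg (N z)\<bar> + \<bar>ptt (N z)\<bar>" and K = "(norm v1 + \<bar>k\<bar>) * \<bar>\<tau>\<bar>"])
    have "((\<lambda>z. \<bar>ptr (N z) - Cg (N z)\<bar> + \<bar>ptt (N z)\<bar>) \<longlongrightarrow> \<bar>b - b\<bar> + \<bar>0\<bar>) ?F"
      unfolding b_def by (intro tendsto_intros limN lim_ptr lim_ptt lim_Cg)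
    then show "((\<lambda>z. \<bar>ptr (N z) - Cg (N z)\<bar> + \<bar>ptt (N z)\<bar>) \<longlongrightarrow> 0) ?F" by simp
    show "\<forall>\<^sub>F z in ?F. norm (G4 z) \<le> norm (\<bar>ptr (N z) - Cg (N z)\<bar> + \<bar>ptt (N z)\<bar>) * ((norm v1 + \<bar>k\<bar>) * \<bar>\<tau>\<bar>)"
    proof (rule ev_good)
      fix z :: V assume z: "fst z \<noteq> 0"
      define C where "C = (ptr (N z) - Cg (N z)) * ?e z + ptt (N z) * k"
      define S where "S = \<bar>ptr (N z) - Cg (N z)\<bar> + \<bar>ptt (N z)\<bar>"
      have r: "norm (fst z) > 0" using z by simp
      have C: "\<bar>C\<bar> \<le> S * (norm v1 + \<bar>k\<bar>)" unfolding C_def S_def by (rule coef_bound[OF ie[OF z]])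
      have "norm (G4 z) = \<bar>C\<bar> / norm (fst z) * (\<bar>\<tau>\<bar> * norm (fst z))"
        by (simp add: G4_def C_def abs_divide abs_mult)
      also have "\<dots> = \<bar>C\<bar> * \<bar>\<tau>\<bar>" using r by simp
      also have "\<dots> \<le> S * (norm v1 + \<bar>k\<bar>) * \<bar>\<tau>\<bar>" using C by (intro mult_right_mono) auto
      finally show "norm (G4 z) \<le> norm (\<bar>ptr (N z) - Cg (N z)\<bar> + \<bar>ptt (N z)\<bar>) * ((norm v1 + \<bar>k\<bar>) * \<bar>\<tau>\<bar>)"
        by (simp add: S_def ac_simps)
    qed
  qed
  have l5: "(G5 \<longlongrightarrow> (b * k) *\<^sub>R w1 + b *\<^sub>R (\<tau> *\<^sub>R v1)) ?F"
    unfolding G5_def c_def b_def by (intro tendsto_intros limN lim_Cg)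
  have "((\<lambda>z. G1 z + G2 z + G3 z + G4 z + G5 z) \<longlongrightarrow> 0 + 0 + 0 + 0 + ((b * k) *\<^sub>R w1 + b *\<^sub>R (\<tau> *\<^sub>R v1))) ?F"
    by (intro tendsto_add l1 l2 l3 l4 l5)
  then have "((\<lambda>z. D2 z v w) \<longlongrightarrow> (b * k) *\<^sub>R w1 + b *\<^sub>R (\<tau> *\<^sub>R v1)) ?F"
    using tendsto_cong[OF eq] by simp
  then show "((\<lambda>z. D2 z v w) \<longlongrightarrow> D2 (0, t0) v w) ?F"
    by (simp add: D2_def M_apply b_def v1_def w1_def k_def \<tau>_def blinfun.scaleR_left blinfun.add_left scaleR_add_right)
qed

end



context rad begin

lemma cN: "isCont N z" unfolding N_def[abs_def] by (intro continuous_intros)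

lemma cGN: "fst z \<noteq> 0 \<Longrightarrow> (\<And>w. 0 < fst w \<Longrightarrow> isCont f w) \<Longrightarrow> isCont (\<lambda>z. f (N z)) z"
  by (rule isCont_o2[OF cN]) (simp add: NP)

lemma cD2': "fst z0 \<noteq> 0 \<Longrightarrow> continuous (at z0) (\<lambda>z. D2' z v)"
proof -
  assume z0: "fst z0 \<noteq> 0"
  have cB: "continuous (at z0) (\<lambda>z. Bg (N z))" using cGN[OF z0 cBg] by simp
  have cC: "continuous (at z0) (\<lambda>z. Cg (N z))" using cGN[OF z0 cCg] by simp
  have c1: "continuous (at z0) (\<lambda>z. prr (N z))" using cGN[OF z0 cprr] by simp
  have c2: "continuous (at z0) (\<lambda>z. prt (N z))" using cGN[OF z0 cprt] by simp
  have c3: "continuous (at z0) (\<lambda>z. ptr (N z))" using cGN[OF z0 cptr] by simp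
  have c4: "continuous (at z0) (\<lambda>z. ptt (N z))" using cGN[OF z0 cptt] by simp
  have cx: "continuous (at z0) (\<lambda>z::V. fst z)" by (intro continuous_intros)
  have cr: "continuous (at z0) (\<lambda>z::V. norm (fst z))" by (intro continuous_intros)
  have r0: "norm (fst z0) \<noteq> 0" using z0 by simp
  have ce: "continuous (at z0) (\<lambda>z. fst z \<bullet> fst v / norm (fst z))"
    using cx cr r0 by (intro continuous_divide continuous_inner continuous_const) auto
  have co: "continuous (at z0) (\<lambda>z. outer (fst z) (fst z) :: V \<Rightarrow>\<^sub>L (real^3))"
    by (intro bounded_bilinear.continuous[OF outer_bb] cx)
  have co2: "continuous (at z0) (\<lambda>z. outer (fst v) (fst z) + outer (fst z) (fst v) :: V \<Rightarrow>\<^sub>L (real^3))"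
    using cx by (intro continuous_add bounded_bilinear.continuous[OF outer_bb] continuous_const)
  have ct: "continuous (at z0) (\<lambda>z. tc (fst z) :: V \<Rightarrow>\<^sub>L (real^3))"
    using cx by (rule bounded_linear.continuous[OF tc_bl])
  have cq: "continuous (at z0) bq" unfolding bq_def[abs_def]
    using cB cr r0 by (intro continuous_divide) auto
  have cc: "continuous (at z0) c" unfolding c_def[abs_def] using cC .
  have t1: "continuous (at z0) (\<lambda>z. (Bg (N z) * (fst z \<bullet> fst v / norm (fst z)) + Cg (N z) * snd v) *\<^sub>R pi1)"
    using cB cC ce by (intro continuous_scaleR continuous_add continuous_mult continuous_const)
  have t2: "continuous (at z0) (\<lambda>z. (((prr (N z) - 3 * Bg (N z)) * (fst z \<bullet> fst v / norm (fst z)) + (prt (N z) - Cg (N z)) * snd v) / (norm (fst z))^2) *\<^sub>R outer (fst z) (fst z))"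
    using c1 c2 cB cC ce cr r0 co
    by (intro continuous_scaleR continuous_divide continuous_add continuous_mult continuous_diff continuous_const continuous_power) auto
  have t3: "continuous (at z0) (\<lambda>z. bq z *\<^sub>R (outer (fst v) (fst z) + outer (fst z) (fst v)))"
    using cq co2 by (rule continuous_scaleR)
  have t4: "continuous (at z0) (\<lambda>z. (((ptr (N z) - Cg (N z)) * (fst z \<bullet> fst v / norm (fst z)) + ptt (N z) * snd v) / norm (fst z)) *\<^sub>R tc (fst z))"
    using c3 c4 cC ce cr r0 ct
    by (intro continuous_scaleR continuous_divide continuous_add continuous_mult continuous_diff continuous_const) auto
  have t5: "continuous (at z0) (\<lambda>z. c z *\<^sub>R tc (fst v))"
    using cc by (intro continuous_scaleR continuous_const)
  show ?thesis unfolding D2'_def[abs_def]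
    using t1 t2 t3 t4 t5 by (intro continuous_add)
qed

lemma ev_open: fixes z0 :: V assumes "fst z0 \<noteq> 0" "\<And>z. fst z \<noteq> 0 \<Longrightarrow> P z" shows "\<forall>\<^sub>F z in at z0. P z"
  unfolding eventually_at_topological using assms open_good by (intro exI[of _ Good]) auto

lemma D2_cont_good: "fst z0 \<noteq> 0 \<Longrightarrow> isCont D2 z0"
  unfolding isCont_def
proof (rule tendsto_bl1)
  fix v assume z0: "fst z0 \<noteq> 0"
  have "((\<lambda>z. D2' z v) \<longlongrightarrow> D2' z0 v) (at z0)"
    using cD2'[OF z0, of v] by (simp add: continuous_at)
  moreover have "\<forall>\<^sub>F z in at z0. D2 z v = D2' z v"
    by (rule ev_open[OF z0]) (simp add: D2_good)
  ultimately show "((\<lambda>z. D2 z v) \<longlongrightarrow> D2 z0 v) (at z0)"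
    using tendsto_cong z0 D2_good by fastforce
qed

lemma at_split: "at (z::V) = sup (at z within Good) (at z within {z. fst z = 0})"
proof -
  have "Good \<union> {z. fst z = 0} = UNIV" by auto
  then show ?thesis using at_within_union[of z Good "{z. fst z = 0}"] by simp
qed

lemma cprt0: "isCont (\<lambda>s. prt (0, s)) t"
proof -
  have "continuous_on UNIV (\<lambda>s. DDp (0, s))"
    by (rule continuous_on_compose2[OF cDDp]) (auto intro!: continuous_intros)
  then have "continuous_on UNIV (\<lambda>s. prt (0, s))"
    unfolding prt_def by (intro continuous_intros)
  then show ?thesis by (simp add: continuous_on_eq_continuous_at)
qed

lemma D2_cont_bad: "fst z0 = 0 \<Longrightarrow> isCont D2 z0"
  unfolding isCont_def
proof (subst at_split, rule filterlim_sup)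
  assume z0: "fst z0 = 0"
  then obtain t0 where z0t: "z0 = (0, t0)" by (cases z0) auto
  show "(D2 \<longlongrightarrow> D2 z0) (at z0 within Good)" using D2_lim[of t0] z0t by simp
  have "((\<lambda>z. prt (0, snd z) *\<^sub>R M) \<longlongrightarrow> prt (0, snd z0) *\<^sub>R M) (at z0 within {z. fst z = 0})"
    by (intro tendsto_intros isCont_tendsto_compose[OF cprt0] tendsto_ident_at)
  moreover have "\<forall>\<^sub>F z in at z0 within {z. fst z = 0}. D2 z = prt (0, snd z) *\<^sub>R M"
    unfolding eventually_at_filter by (rule always_eventually) (auto simp: D2_def)
  ultimately show "(D2 \<longlongrightarrow> D2 z0) (at z0 within {z. fst z = 0})"
    using tendsto_cong z0 by (fastforce simp: D2_def)
qed

lemma D2_cont: "continuous_on UNIV D2"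
proof (intro continuous_at_imp_continuous_on ballI)
  fix z show "isCont D2 z" by (cases "fst z = 0") (simp_all add: D2_cont_bad D2_cont_good)
qed

lemma U_deriv: "(Uf has_derivative blinfun_apply (D1 z)) (at z)"
proof (cases "fst z = 0")
  case False then show ?thesis using dU[OF False] by (simp add: D1_def)
next
  case True
  then obtain t0 where z: "z = (0, t0)" by (cases z) auto
  show ?thesis unfolding z
  proof (rule ext_deriv_aux)
    show "(Uf has_derivative blinfun_apply (D1 z)) (at z)" if "fst z \<noteq> 0" for z
      using dU[OF that] that by (simp add: D1_def)
    show "(D1 \<longlongrightarrow> D1 (0, t0)) (at (0, t0) within Good)" by (rule D1_lim)
    show "(Uf \<longlongrightarrow> Uf b) (at b within Good)" if b0: "fst b = 0" for b
    proof -
      obtain s where "b = (0, s)" using b0 by (cases b) auto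
      then show ?thesis using U_lim[of s] by (simp add: Uf_def)
    qed
  qed simp
qed

lemma D1_deriv: "(D1 has_derivative blinfun_apply (D2 z)) (at z)"
proof (cases "fst z = 0")
  case False
  have "(D1g has_derivative blinfun_apply (D2 z)) (at z)" using dD1g[OF False] D2_good[OF False] by simp
  then show ?thesis
    by (rule has_derivative_transform_within_open[OF _ open_good]) (use False in \<open>auto simp: D1_def\<close>)
next
  case True
  then obtain t0 where z: "z = (0, t0)" by (cases z) auto
  show ?thesis unfolding z
  proof (rule ext_deriv_aux)
    show "(D1 has_derivative blinfun_apply (D2 z)) (at z)" if "fst z \<noteq> 0" for z
    proof -
      have "(D1g has_derivative blinfun_apply (D2 z)) (at z)" using dD1g[OF that] D2_good[OF that] by simp
      then show ?thesis
        by (rule has_derivative_transform_within_open[OF _ open_good]) (use that in \<open>auto simp: D1_def\<close>)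
    qed
    show "(D2 \<longlongrightarrow> D2 (0, t0)) (at (0, t0) within Good)" by (rule D2_lim)
    show "(D1 \<longlongrightarrow> D1 b) (at b within Good)" if b0: "fst b = 0" for b
    proof -
      obtain s where "b = (0, s)" using b0 by (cases b) auto
      then show ?thesis using D1_lim[of s] by simp
    qed
  qed simp
qed

lemma U_C2: "C2_on UNIV Uf"
  unfolding C2_on_def
  by (intro exI[of _ D1] exI[of _ D2] conjI ballI U_deriv D1_deriv D2_cont)

end



lemma nb_right: "0 \<le> (r::real) \<Longrightarrow> at r within {0..} \<noteq> bot"
proof
  assume r: "0 \<le> r" and b: "at r within {0..} = bot"
  have "at r within {r<..} \<le> at r within {0..}" using r by (intro at_le) auto
  with b have "at_right r = bot" by (simp add: bot_unique)
  then show False using trivial_limit_at_right_real[of r] by simp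
qed

context rad begin

lemma Uf_eq: "Uf (x, t) = (if x = 0 then 0 else (\<psi> (norm x) t / norm x) *\<^sub>R x)"
  by (simp add: Uf_def a_def Ag_def N_def)

lemma axis_sym: "axis j (1::real) $ k = axis k 1 $ j" by (simp add: axis_def)

lemma D1_sym: "(D1 (y, t) (axis j 1, 0)) $ k = (D1 (y, t) (axis k 1, 0)) $ j"
  by (cases "y = 0") (auto simp: D1_def D1g_def bq_def blinfun.add_left blinfun.scaleR_left axis_sym[of j k] inner_axis inner_axis' ac_simps)

lemma pdiff_U: "pdiff (\<lambda>y. Uf (y, t) $ k) j y = (D1 (y, t) (axis j 1, 0)) $ k"
proof -
  have "((\<lambda>y. Uf (y, t)) has_derivative (\<lambda>h. D1 (y, t) (h, 0))) (at y)"
  proof -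
    have "((\<lambda>y. (y, t)) has_derivative (\<lambda>h. (h, 0))) (at y)" by (auto intro!: derivative_eq_intros)
    from has_derivative_compose[OF this U_deriv] show ?thesis by simp
  qed
  then have "((\<lambda>y. Uf (y, t) $ k) has_derivative (\<lambda>h. D1 (y, t) (h, 0) $ k)) (at y)"
    by (rule bounded_linear.has_derivative[OF bounded_linear_vec_nth])
  from frechet_derivative_at[OF this] show ?thesis unfolding pdiff_def by (metis (no_types))
qed

lemma curl_U0: "curl (\<lambda>y. Uf (y, t)) x = 0"
  unfolding curl_def pdiff_U
  by (simp add: vec_eq_iff forall_3 D1_sym[of x t 3 2] D1_sym[of x t 3 1] D1_sym[of x t 2 1])

lemma curl_0: "curl (\<lambda>y. 0) x = 0"
proof -
  have "frechet_derivative (\<lambda>y::real^3. 0::real) (at x) = (\<lambda>h. 0)"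
    using frechet_derivative_at[OF has_derivative_const[of "0::real"]] by simp
  then show ?thesis unfolding curl_def pdiff_def by (simp add: vec_eq_iff forall_3)
qed

lemma curlcurl: "curl (curl (\<lambda>y. Uf (y, t))) x = 0"
proof -
  have "curl (\<lambda>y. Uf (y, t)) = (\<lambda>y. 0)" using curl_U0 by auto
  then show ?thesis using curl_0 by simp
qed

lemma vd1: "vector_derivative (\<lambda>\<tau>'. Uf (x, \<tau>')) (at \<tau>) = (pt (norm x, \<tau>) / norm x) *\<^sub>R x"
proof (cases "x = 0")
  case True then show ?thesis by (simp add: Uf_eq)
next
  case False
  have "((\<lambda>\<tau>'. (\<psi> (norm x) \<tau>' / norm x) *\<^sub>R x) has_vector_derivative (pt (norm x, \<tau>) / norm x) *\<^sub>R x) (at \<tau>)"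
    using F4[of "norm x" \<tau>] False by (auto intro!: derivative_eq_intros simp: has_real_derivative_iff_has_vector_derivative[symmetric])
  then show ?thesis using False by (simp add: Uf_eq vector_derivative_at)
qed

lemma vd2: "vector_derivative (\<lambda>\<tau>. vector_derivative (\<lambda>\<tau>'. Uf (x, \<tau>')) (at \<tau>)) (at t) = (ptt (norm x, t) / norm x) *\<^sub>R x"
proof (cases "x = 0")
  case True then show ?thesis by (simp add: vd1)
next
  case False
  have "((\<lambda>\<tau>. (pt (norm x, \<tau>) / norm x) *\<^sub>R x) has_vector_derivative (ptt (norm x, t) / norm x) *\<^sub>R x) (at t)"
    using F6[of "norm x" t] False by (auto intro!: derivative_eq_intros simp: has_real_derivative_iff_has_vector_derivative[symmetric])
  then show ?thesis by (simp add: vd1 vector_derivative_at)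
qed

lemma dd_psi: "0 \<le> r \<Longrightarrow> deriv (\<lambda>\<tau>. deriv (\<lambda>\<tau>'. \<psi> r \<tau>') \<tau>) t = ptt (r, t)"
proof -
  assume r: "0 \<le> r"
  have "(\<lambda>\<tau>. deriv (\<lambda>\<tau>'. \<psi> r \<tau>') \<tau>) = (\<lambda>\<tau>. pt (r, \<tau>))"
    using F4[OF r] by (auto intro: DERIV_imp_deriv)
  then show ?thesis using F6[OF r] by (simp add: DERIV_imp_deriv)
qed

end



theorem lemma2p2:
  fixes p :: real
    and s q V :: "real^3 \<Rightarrow> real"
    and st qt Vt :: "real \<Rightarrow> real"
    and \<psi> :: "real \<Rightarrow> real \<Rightarrow> real"
    and U :: "real^3 \<Rightarrow> real \<Rightarrow> real^3"
  assumes p: "p > 1"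
    and pos: "\<And>x. s x > 0" "\<And>x. q x > 0" "\<And>x. V x > 0"
    and C2_coeff: "C2_on UNIV s" "C2_on UNIV q" "C2_on UNIV V"
    and rep: "\<And>x. s x = st (norm x)" "\<And>x. q x = qt (norm x)" "\<And>x. V x = Vt (norm x)"
    and psi_C2: "C2_on ({0..} \<times> UNIV) (\<lambda>(r, t). \<psi> r t)"
    and psi_0: "\<And>t. \<psi> 0 t = 0"
    and psi_dd_0: "\<And>t. vector_derivative
                      (\<lambda>r. vector_derivative (\<lambda>\<rho>. \<psi> \<rho> t) (at r within {0..}))
                      (at 0 within {0..}) = 0"
    and U_def: "\<And>x t. U x t = (if x = 0 then 0 else (\<psi> (norm x) t / norm x) *\<^sub>R x)"
  shows "C2_on UNIV (\<lambda>(x, t). U x t) \<and>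
    (\<forall>\<sigma>\<in>{1, -1 :: real}.
      (\<forall>x t. s x *\<^sub>R vector_derivative (\<lambda>\<tau>. vector_derivative (\<lambda>\<tau>'. U x \<tau>') (at \<tau>)) (at t)
             + curl (curl (\<lambda>y. U y t)) x
             + q x *\<^sub>R U x t
             + (\<sigma> * V x * norm (U x t) powr (p - 1)) *\<^sub>R U x t = 0)
      \<longleftrightarrow>
      (\<forall>r t. r \<ge> 0 \<longrightarrow>
             st r * deriv (\<lambda>\<tau>. deriv (\<lambda>\<tau>'. \<psi> r \<tau>') \<tau>) t
             + qt r * \<psi> r t
             + \<sigma> * Vt r * \<bar>\<psi> r t\<bar> powr (p - 1) * \<psi> r t = 0))"
proof -
  obtain Dp :: "R2 \<Rightarrow> (R2 \<Rightarrow>\<^sub>L real)" and DDp :: "R2 \<Rightarrow> (R2 \<Rightarrow>\<^sub>L (R2 \<Rightarrow>\<^sub>L real))" where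
    dP0: "\<forall>z\<in>{0..} \<times> UNIV. ((\<lambda>(r, t). \<psi> r t) has_derivative blinfun_apply (Dp z)) (at z within {0..} \<times> UNIV)"
    and dDp0: "\<forall>z\<in>{0..} \<times> UNIV. (Dp has_derivative blinfun_apply (DDp z)) (at z within {0..} \<times> UNIV)"
    and cD: "continuous_on ({0..} \<times> UNIV) DDp"
    using psi_C2 unfolding C2_on_def by metis
  have dP: "\<And>z. z \<in> {0..} \<times> UNIV \<Longrightarrow> ((\<lambda>(r, t). \<psi> r t) has_derivative blinfun_apply (Dp z)) (at z within {0..} \<times> UNIV)"
    using dP0 by blast
  have dDp: "\<And>z. z \<in> {0..} \<times> UNIV \<Longrightarrow> (Dp has_derivative blinfun_apply (DDp z)) (at z within {0..} \<times> UNIV)"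
    using dDp0 by blast
  interpret R0: rad0 \<psi> Dp DDp
    using dP dDp cD psi_0 by unfold_locales auto
  have prr0: "DDp (0, t) (1, 0) (1, 0) = 0" for t
  proof -
    have vd: "vector_derivative (\<lambda>\<rho>. \<psi> \<rho> t) (at r within {0..}) = R0.pr (r, t)" if r: "0 \<le> r" for r
      using R0.F1[OF r, of t] r
      by (intro vector_derivative_within nb_right) (auto simp: has_real_derivative_iff_has_vector_derivative)
    have "((\<lambda>r. vector_derivative (\<lambda>\<rho>. \<psi> \<rho> t) (at r within {0..})) has_field_derivative R0.prr (0, t)) (at 0 within {0..})"
      by (rule has_field_derivative_transform_within[OF R0.F2[of 0 t] zero_less_one]) (auto simp: vd)
    then have "vector_derivative (\<lambda>r. vector_derivative (\<lambda>\<rho>. \<psi> \<rho> t) (at r within {0..})) (at 0 within {0..}) = R0.prr (0, t)"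
      by (intro vector_derivative_within nb_right) (auto simp: has_real_derivative_iff_has_vector_derivative)
    then show ?thesis using psi_dd_0[of t] by (simp add: R0.prr_def)
  qed
  interpret R: rad \<psi> Dp DDp
    by unfold_locales (rule prr0)
  have Ux: "U x t = R.Uf (x, t)" for x t by (simp add: U_def R.Uf_eq)
  have Ueq: "(\<lambda>(x, t). U x t) = R.Uf" by (auto simp: Ux)
  show ?thesis
  proof (intro conjI ballI)
    show "C2_on UNIV (\<lambda>(x, t). U x t)" using R.U_C2 Ueq by simp
    fix \<sigma> :: real
    define E where "E r t = st r * R0.ptt (r, t) + qt r * \<psi> r t + \<sigma> * Vt r * \<bar>\<psi> r t\<bar> powr (p - 1) * \<psi> r t" for r t
    have E0: "E 0 t = 0" for t by (simp add: E_def psi_0 R0.ptt0)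
    have rhs: "(st r * deriv (\<lambda>\<tau>. deriv (\<lambda>\<tau>'. \<psi> r \<tau>') \<tau>) t + qt r * \<psi> r t
             + \<sigma> * Vt r * \<bar>\<psi> r t\<bar> powr (p - 1) * \<psi> r t = 0) \<longleftrightarrow> E r t = 0" if "0 \<le> r" for r t
      using R.dd_psi[OF that] by (simp add: E_def)
    have lhs: "(s x *\<^sub>R vector_derivative (\<lambda>\<tau>. vector_derivative (\<lambda>\<tau>'. U x \<tau>') (at \<tau>)) (at t)
             + curl (curl (\<lambda>y. U y t)) x
             + q x *\<^sub>R U x t
             + (\<sigma> * V x * norm (U x t) powr (p - 1)) *\<^sub>R U x t = 0) \<longleftrightarrow> (x \<noteq> 0 \<longrightarrow> E (norm x) t = 0)" for x t
    proof -
      have cc: "curl (curl (\<lambda>y. U y t)) x = 0" unfolding Ux by (rule R.curlcurl)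
      have vv: "vector_derivative (\<lambda>\<tau>. vector_derivative (\<lambda>\<tau>'. U x \<tau>') (at \<tau>)) (at t) = (R0.ptt (norm x, t) / norm x) *\<^sub>R x"
        unfolding Ux by (rule R.vd2)
      show ?thesis
      proof (cases "x = 0")
        case True then show ?thesis using vv cc by (simp add: Ux R.Uf_eq)
      next
        case False
        then have r: "norm x > 0" by simp
        have nU: "norm (U x t) = \<bar>\<psi> (norm x) t\<bar>" using False by (simp add: U_def abs_divide)
        have "s x *\<^sub>R vector_derivative (\<lambda>\<tau>. vector_derivative (\<lambda>\<tau>'. U x \<tau>') (at \<tau>)) (at t)
             + curl (curl (\<lambda>y. U y t)) x
             + q x *\<^sub>R U x t
             + (\<sigma> * V x * norm (U x t) powr (p - 1)) *\<^sub>R U x t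
            = (E (norm x) t / norm x) *\<^sub>R x"
        proof -
          let ?r = "norm x" and ?v = "\<psi> (norm x) t"
          have e1: "s x *\<^sub>R ((R0.ptt (?r, t) / ?r) *\<^sub>R x) + 0 + q x *\<^sub>R ((?v / ?r) *\<^sub>R x)
              + (\<sigma> * V x * \<bar>?v\<bar> powr (p - 1)) *\<^sub>R ((?v / ?r) *\<^sub>R x)
              = (s x * (R0.ptt (?r, t) / ?r) + q x * (?v / ?r) + \<sigma> * V x * \<bar>?v\<bar> powr (p - 1) * (?v / ?r)) *\<^sub>R x"
            by (simp only: scaleR_scaleR scaleR_add_left add_0_right)
          have e2: "s x * (R0.ptt (?r, t) / ?r) + q x * (?v / ?r) + \<sigma> * V x * \<bar>?v\<bar> powr (p - 1) * (?v / ?r) = E ?r t / ?r"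
            unfolding E_def rep by (simp add: add_divide_distrib)
          have Uxx: "U x t = (?v / ?r) *\<^sub>R x" using False by (simp add: U_def)
          show ?thesis unfolding vv cc nU unfolding Uxx e1 e2 by (rule refl)
        qed
        then show ?thesis using False r by simp
      qed
    qed
    show "(\<forall>x t. s x *\<^sub>R vector_derivative (\<lambda>\<tau>. vector_derivative (\<lambda>\<tau>'. U x \<tau>') (at \<tau>)) (at t)
             + curl (curl (\<lambda>y. U y t)) x
             + q x *\<^sub>R U x t
             + (\<sigma> * V x * norm (U x t) powr (p - 1)) *\<^sub>R U x t = 0)
      \<longleftrightarrow>
      (\<forall>r t. r \<ge> 0 \<longrightarrow>
             st r * deriv (\<lambda>\<tau>. deriv (\<lambda>\<tau>'. \<psi> r \<tau>') \<tau>) t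
             + qt r * \<psi> r t
             + \<sigma> * Vt r * \<bar>\<psi> r t\<bar> powr (p - 1) * \<psi> r t = 0)"
      unfolding lhs
    proof (intro iffI allI impI)
      fix r t :: real assume H: "\<forall>(x::real^3) t. x \<noteq> 0 \<longrightarrow> E (norm x) t = 0" and r: "0 \<le> r"
      show "st r * deriv (\<lambda>\<tau>. deriv (\<lambda>\<tau>'. \<psi> r \<tau>') \<tau>) t + qt r * \<psi> r t + \<sigma> * Vt r * \<bar>\<psi> r t\<bar> powr (p - 1) * \<psi> r t = 0"
        unfolding rhs[OF r]
      proof (cases "r = 0")
        case True then show "E r t = 0" by (simp add: E0)
      next
        case False
        let ?x = "r *\<^sub>R axis (1::3) (1::real)"
        have x0: "?x \<noteq> 0" "norm ?x = r" using False r by (auto simp: axis_eq_0_iff)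
        have "\<forall>t. ?x \<noteq> 0 \<longrightarrow> E (norm ?x) t = 0" using H by (rule spec)
        then have "?x \<noteq> 0 \<longrightarrow> E (norm ?x) t = 0" by (rule spec)
        then have "E (norm ?x) t = 0" using x0(1) by (rule mp)
        then show "E r t = 0" using x0(2) by simp
      qed
    next
      fix x :: "real^3" and t :: real
      assume H: "\<forall>r t. 0 \<le> r \<longrightarrow> st r * deriv (\<lambda>\<tau>. deriv (\<lambda>\<tau>'. \<psi> r \<tau>') \<tau>) t + qt r * \<psi> r t + \<sigma> * Vt r * \<bar>\<psi> r t\<bar> powr (p - 1) * \<psi> r t = 0"
        and "x \<noteq> 0"
      show "E (norm x) t = 0" using H[rule_format, of "norm x" t] rhs[of "norm x" t] by simp
    qed
  qed
qed



end
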